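(* Let $N=N_{M,P,\tau}$ be a Nakamura manifold (complex dimension $n+1$) and let $1\le p\le n-1$. Then $N$ admits no $p$-Kähler structure.
   Context: Setup. Let $n\ge2$ and $M\in\mathrm{SL}(n,\mathbb Z)$ be diagonalizable over $\mathbb R$ with positive eigenvalues; let $P\in\mathrm{GL}(n,\mathbb R)$ and $\lambda_1,\dots,\lambda_n\in\mathbb R$ with $PMP^{-1}=\mathrm{diag}(e^{\lambda_1},\dots,e^{\lambda_n})$. Standing assumption: $\lambda_i\neq0$ for all $i$. Let $\rho(w)=\mathrm{diag}(e^{\frac12\lambda_1(w+\bar w)},\dots,e^{\frac12\lambda_n(w+\bar w)})$ and $G_M=\mathbb C\ltimes_\rho\mathbb C^n$ with coordinates $(w,z_1,\dots,z_n)$ and product $(w',z')*(w,z)=(w'+w,\,z'+\rho(w')z)$. For $\tau\in\mathbb R\setminus\{0\}$, $\Gamma'_\tau=\mathbb Z\oplus\sqrt{-1}\tau\mathbb Z$, $\Gamma''_P=P\mathbb Z^n\oplus\sqrt{-1}P\mathbb Z^n$, $\Gamma_{P,\tau}=\Gamma'_\tau\ltimes_\rho\Gamma''_P\subset G_M$, and $N=N_{M,P,\tau}=\Gamma_{P,\tau}\backslash G_M$, a compact complex manifold of dimension $n+1$. A $p$-Kähler structure on a complex manifold $X$ of complex dimension $m$ is a $d$-closed real $(p,p)$-form $\Omega$ that is transverse at each point: for every nonzero decomposable $(m-p,0)$-covector $\psi=\eta^1\wedge\dots\wedge\eta^{m-p}$, the form $\Omega\wedge\sigma_{m-p}\psi\wedge\bar\psi$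 is a strictly positive multiple of the standard volume form, where $\sigma_k=(\sqrt{-1})^{k^2}2^{-k}$. *)

theory Defs
  imports "HOL-Analysis.Analysis" "HOL-Combinatorics.Permutations"
begin

text \<open>For the Nakamura group G_M = C x C^n we use 'm = 'n option, where the
coordinate None is w and the coordinate Some i is z_i.\<close>

type_synonym 'm cvec = "complex^'m"

text \<open>A complex-valued k-covector at a point: a function of the argument sequence
v 0, v 1, ... of real tangent vectors (only v 0 .. v (k-1) matter).\<close>

type_synonym 'm cform = "(nat \<Rightarrow> complex^'m) \<Rightarrow> complex"

text \<open>Wedge product of a k-covector and an l-covector (Alt convention,
so that dx /\ dy (e, i e) = 1).\<close>

definition wedge :: "nat \<Rightarrow> nat \<Rightarrow> 'm cform \<Rightarrow> 'm cform \<Rightarrow> 'm cform" where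
  "wedge k l \<alpha> \<beta> = (\<lambda>v.
     (\<Sum>\<sigma> | \<sigma> permutes {..<k+l}.
        (sign \<sigma> :: complex) * \<alpha> (\<lambda>i. v (\<sigma> i)) * \<beta> (\<lambda>i. v (\<sigma> (k + i))))
     / (of_nat (fact k * fact l) :: complex))"

fun wedge_list :: "'m cform list \<Rightarrow> 'm cform" where
  "wedge_list [] = (\<lambda>v. 1)"
| "wedge_list (\<alpha> # \<alpha>s) = wedge 1 (length \<alpha>s) \<alpha> (wedge_list \<alpha>s)"

fun wedge_list2 :: "'m cform list \<Rightarrow> 'm cform" where
  "wedge_list2 [] = (\<lambda>v. 1)"
| "wedge_list2 (\<alpha> # \<alpha>s) = wedge 2 (2 * length \<alpha>s) \<alpha> (wedge_list2 \<alpha>s)"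

definition dz :: "('m::finite) \<Rightarrow> 'm cform" where
  "dz j = (\<lambda>v. v 0 $ j)"

definition dzbar :: "('m::finite) \<Rightarrow> 'm cform" where
  "dzbar j = (\<lambda>v. cnj (v 0 $ j))"

definition dx :: "('m::finite) \<Rightarrow> 'm cform" where
  "dx j = (\<lambda>v. complex_of_real (Re (v 0 $ j)))"

definition dy :: "('m::finite) \<Rightarrow> 'm cform" where
  "dy j = (\<lambda>v. complex_of_real (Im (v 0 $ j)))"

definition cnj_form :: "'m cform \<Rightarrow> 'm cform" where
  "cnj_form \<psi> = (\<lambda>v. cnj (\<psi> v))"

text \<open>Standard volume form dx_1/\dy_1/\.../\dx_m/\dy_m (the factors are 2-forms and
commute, so the enumeration order of the coordinates is irrelevant).\<close>

definition std_vol :: "('m::finite) cform" where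
  "std_vol = wedge_list2 (map (\<lambda>j. wedge 1 1 (dx j) (dy j))
                 (SOME l. distinct l \<and> set l = (UNIV :: 'm set)))"

definition sigma_const :: "nat \<Rightarrow> complex" where
  "sigma_const k = \<i> ^ (k^2) / 2 ^ k"

definition is_pp_covector :: "nat \<Rightarrow> ('m::finite) cform \<Rightarrow> bool" where
  "is_pp_covector p \<alpha> \<longleftrightarrow> (\<exists>c :: (nat \<Rightarrow> 'm) \<Rightarrow> (nat \<Rightarrow> 'm) \<Rightarrow> complex.
      \<alpha> = (\<lambda>v. \<Sum>a\<in>{..<p} \<rightarrow>\<^sub>E (UNIV :: 'm set). \<Sum>b\<in>{..<p} \<rightarrow>\<^sub>E (UNIV :: 'm set).
              c a b * wedge p p (wedge_list (map (\<lambda>i. dz (a i)) [0..<p]))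
                                (wedge_list (map (\<lambda>i. dzbar (b i)) [0..<p])) v))"

definition is_real_covector :: "'m cform \<Rightarrow> bool" where
  "is_real_covector \<alpha> \<longleftrightarrow> (\<forall>v. \<alpha> v \<in> \<real>)"

definition decomposable_k0 :: "nat \<Rightarrow> ('m::finite) cform \<Rightarrow> bool" where
  "decomposable_k0 k \<psi> \<longleftrightarrow> (\<exists>a :: nat \<Rightarrow> 'm \<Rightarrow> complex.
      \<psi> = wedge_list (map (\<lambda>l. (\<lambda>v. \<Sum>j\<in>UNIV. a l j * v 0 $ j)) [0..<k]))"

definition transverse :: "nat \<Rightarrow> ('m::finite) cform \<Rightarrow> bool" where
  "transverse p \<Omega> \<longleftrightarrow> (let q = CARD('m) - p in
     \<forall>\<psi>. decomposable_k0 q \<psi> \<and> \<psi> \<noteq> (\<lambda>v. 0) \<longrightarrow>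
        (\<exists>c::real. c > 0 \<and>
           wedge (2*p) (2*q) \<Omega> (\<lambda>v. sigma_const q * wedge q q \<psi> (cnj_form \<psi>) v)
             = (\<lambda>v. complex_of_real c * std_vol v)))"

text \<open>C-infinity maps (all iterated directional derivatives exist).\<close>

coinductive smooth_map :: "('a::real_normed_vector \<Rightarrow> 'b::real_normed_vector) \<Rightarrow> bool" where
  "(\<And>x. f differentiable (at x)) \<Longrightarrow> (\<And>v. smooth_map (\<lambda>x. frechet_derivative f (at x) v))
     \<Longrightarrow> smooth_map f"

text \<open>Exterior derivative of a k-form field (coordinate formula with constant vector fields).\<close>

definition ext_d :: "nat \<Rightarrow> ('m::finite cvec \<Rightarrow> 'm cform) \<Rightarrow> ('m cvec \<Rightarrow> 'm cform)" where
  "ext_d k \<Omega> = (\<lambda>x v. \<Sum>i\<le>k. (-1) ^ i *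
       frechet_derivative (\<lambda>y. \<Omega> y (\<lambda>j. if j < i then v j else v (Suc j))) (at x) (v i))"

definition p_kaehler_form :: "nat \<Rightarrow> ('m::finite cvec \<Rightarrow> 'm cform) \<Rightarrow> bool" where
  "p_kaehler_form p \<Omega> \<longleftrightarrow>
     (\<forall>v. smooth_map (\<lambda>x. \<Omega> x v)) \<and>
     (\<forall>x. is_pp_covector p (\<Omega> x) \<and> is_real_covector (\<Omega> x) \<and> transverse p (\<Omega> x)) \<and>
     ext_d (2*p) \<Omega> = (\<lambda>x v. 0)"

definition nak_lattice :: "real \<Rightarrow> real^'n^'n \<Rightarrow> (complex \<times> (complex^'n)) set" where
  "nak_lattice \<tau> P = {(of_int a + \<i> * complex_of_real (\<tau> * of_int b),
        (\<chi> i. complex_of_real ((P *v (\<chi> j. real_of_int (u $ j))) $ i)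
              + \<i> * complex_of_real ((P *v (\<chi> j. real_of_int (u' $ j))) $ i)))
      | a b u u'. True}"

definition nak_ltrans :: "('n \<Rightarrow> real) \<Rightarrow> complex \<times> (complex^'n) \<Rightarrow> complex^('n option) \<Rightarrow> complex^('n option)" where
  "nak_ltrans lam \<gamma> x = (\<chi> k. case k of None \<Rightarrow> fst \<gamma> + x $ None
      | Some i \<Rightarrow> snd \<gamma> $ i + complex_of_real (exp (lam i * Re (fst \<gamma>))) * x $ Some i)"

definition nak_dltrans :: "('n \<Rightarrow> real) \<Rightarrow> complex \<times> (complex^'n) \<Rightarrow> complex^('n option) \<Rightarrow> complex^('n option)" where
  "nak_dltrans lam \<gamma> v = (\<chi> k. case k of None \<Rightarrow> v $ None
      | Some i \<Rightarrow> complex_of_real (exp (lam i * Re (fst \<gamma>))) * v $ Some i)"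

text \<open>A p-Kaehler structure on N = Gamma \ G_M, identified with a Gamma-invariant
p-Kaehler form on G_M (pull-back along the holomorphic covering G_M -> N).\<close>

definition nakamura_p_kaehler ::
  "('n::finite \<Rightarrow> real) \<Rightarrow> real^'n^'n \<Rightarrow> real \<Rightarrow> nat \<Rightarrow> (complex^('n option) \<Rightarrow> ('n option) cform) \<Rightarrow> bool" where
  "nakamura_p_kaehler lam P \<tau> p \<Omega> \<longleftrightarrow>
     p_kaehler_form p \<Omega> \<and>
     (\<forall>\<gamma>\<in>nak_lattice \<tau> P. \<forall>x v. \<Omega> (nak_ltrans lam \<gamma> x) (\<lambda>j. nak_dltrans lam \<gamma> (v j)) = \<Omega> x v)"

end

theory Submission
  imports Defs
begin

definition local_form :: "nat \<Rightarrow> ('m::finite) cform \<Rightarrow> bool" where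
  "local_form d f \<longleftrightarrow> (\<forall>V V'. (\<forall>i<d. V i = V' i) \<longrightarrow> f V = f V')"

definition alt_form :: "nat \<Rightarrow> ('m::finite) cform \<Rightarrow> bool" where
  "alt_form d f \<longleftrightarrow> (\<forall>\<pi> V. \<pi> permutes {..<d} \<longrightarrow> f (\<lambda>i. V (\<pi> i)) = of_int (sign \<pi>) * f V)"

definition hom_form :: "nat \<Rightarrow> ('m::finite) cform \<Rightarrow> bool" where
  "hom_form d f \<longleftrightarrow> (\<forall>V r. f (\<lambda>i. r i *\<^sub>R V i) = of_real (\<Prod>i<d. r i) * f V)"

definition vanish_on :: "nat \<Rightarrow> (complex^'m::finite) set \<Rightarrow> 'm cform \<Rightarrow> bool" where
  "vanish_on d Z f \<longleftrightarrow> (\<forall>V. (\<exists>i<d. V i \<in> Z) \<longrightarrow> f V = 0)"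

lemma wedge_local:
  assumes "local_form k \<alpha>" "local_form l \<beta>"
  shows "local_form (k+l) (wedge k l \<alpha> \<beta>)"
  unfolding local_form_def
proof (intro allI impI)
  fix V V' :: "nat \<Rightarrow> complex^'a" assume H: "\<forall>i<k+l. V i = V' i"
  have "\<And>\<sigma>. \<sigma> permutes {..<k+l} \<Longrightarrow>
     (of_int (sign \<sigma>)::complex) * \<alpha> (\<lambda>i. V (\<sigma> i)) * \<beta> (\<lambda>i. V (\<sigma> (k + i)))
   = of_int (sign \<sigma>) * \<alpha> (\<lambda>i. V' (\<sigma> i)) * \<beta> (\<lambda>i. V' (\<sigma> (k + i)))"
  proof -
    fix \<sigma> assume \<sigma>: "\<sigma> permutes {..<k+l}"
    have 1: "\<alpha> (\<lambda>i. V (\<sigma> i)) = \<alpha> (\<lambda>i. V' (\<sigma> i))"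
      using assms(1)[unfolded local_form_def, rule_format, of "\<lambda>i. V (\<sigma> i)" "\<lambda>i. V' (\<sigma> i)"]
        H permutes_in_image[OF \<sigma>] by auto
    have 2: "\<beta> (\<lambda>i. V (\<sigma> (k+i))) = \<beta> (\<lambda>i. V' (\<sigma> (k+i)))"
      using assms(2)[unfolded local_form_def, rule_format, of "\<lambda>i. V (\<sigma> (k+i))" "\<lambda>i. V' (\<sigma> (k+i))"]
        H permutes_in_image[OF \<sigma>] by auto
    show "?thesis \<sigma>" using 1 2 by simp
  qed
  then show "wedge k l \<alpha> \<beta> V = wedge k l \<alpha> \<beta> V'"
    unfolding wedge_def by (intro arg_cong[where f="\<lambda>x. x / _"] sum.cong) auto
qed

lemma sign_comp_perm:
  fixes d :: nat
  assumes "\<pi> permutes {..<d}" "\<sigma> permutes {..<d}"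
  shows "sign (\<pi> \<circ> \<sigma>) = sign \<pi> * sign \<sigma>"
  using permutes_imp_permutation[of "{..<d}" \<pi>] permutes_imp_permutation[of "{..<d}" \<sigma>] assms
  by (simp add: sign_compose)

lemma wedge_alt: "alt_form (k+l) (wedge k l \<alpha> \<beta>)"
  unfolding alt_form_def
proof (intro allI impI)
  fix \<pi> and V :: "nat \<Rightarrow> complex^'a" assume \<pi>: "\<pi> permutes {..<k+l}"
  let ?S = "{\<sigma>. \<sigma> permutes {..<k+l}}"
  define F where "F = (\<lambda>\<sigma>. (of_int (sign \<sigma>)::complex) * \<alpha> (\<lambda>i. V (\<sigma> i)) * \<beta> (\<lambda>i. V (\<sigma> (k + i))))"
  have eq: "\<And>\<sigma>. \<sigma> \<in> ?S \<Longrightarrow> (of_int (sign \<sigma>)::complex) * \<alpha> (\<lambda>i. V (\<pi> (\<sigma> i))) * \<beta> (\<lambda>i. V (\<pi> (\<sigma> (k + i))))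
        = of_int (sign \<pi>) * F (\<pi> \<circ> \<sigma>)"
  proof -
    fix \<sigma> assume "\<sigma> \<in> ?S"
    hence s: "sign (\<pi> \<circ> \<sigma>) = sign \<pi> * sign \<sigma>" using sign_comp_perm[OF \<pi>] by auto
    have "(of_int (sign \<pi>)::complex) * of_int (sign (\<pi> \<circ> \<sigma>)) = of_int (sign \<pi> * sign \<pi> * sign \<sigma>)"
      by (simp only: s of_int_mult mult.assoc)
    also have "\<dots> = of_int (sign \<sigma>)" by (simp only: sign_idempotent) simp
    finally show "?thesis \<sigma>" unfolding F_def by (simp add: mult.assoc[symmetric])
  qed
  have "wedge k l \<alpha> \<beta> (\<lambda>i. V (\<pi> i)) = (\<Sum>\<sigma>\<in>?S. of_int (sign \<pi>) * F (\<pi> \<circ> \<sigma>)) / of_nat (fact k * fact l)"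
    unfolding wedge_def using eq by (intro arg_cong[where f="\<lambda>x. x / _"] sum.cong) auto
  also have "(\<Sum>\<sigma>\<in>?S. of_int (sign \<pi>) * F (\<pi> \<circ> \<sigma>)) = of_int (sign \<pi>) * (\<Sum>\<sigma>\<in>?S. F \<sigma>)"
    by (simp add: sum_distrib_left[symmetric] setum_permutations_compose_left[OF \<pi>, symmetric])
  finally show "wedge k l \<alpha> \<beta> (\<lambda>i. V (\<pi> i)) = of_int (sign \<pi>) * wedge k l \<alpha> \<beta> V"
    unfolding wedge_def F_def by simp
qed


definition shiftp :: "nat \<Rightarrow> nat \<Rightarrow> (nat \<Rightarrow> nat) \<Rightarrow> nat \<Rightarrow> nat" where
  "shiftp k l \<rho> = (\<lambda>j. if k \<le> j \<and> j < k + l then k + \<rho> (j - k) else j)"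

lemma shiftp_map:
  assumes "\<rho> permutes {..<l}"
  shows "shiftp k l \<rho> = map_permutation {..<l} ((+) k) \<rho>"
proof
  fix j
  show "shiftp k l \<rho> j = map_permutation {..<l} ((+) k) \<rho> j"
  proof (cases "k \<le> j \<and> j < k + l")
    case True
    then obtain i where i: "j = k + i" "i < l" by (metis add_less_cancel_left le_add_diff_inverse)
    have "map_permutation {..<l} ((+) k) \<rho> (k + i) = k + \<rho> i"
      by (rule map_permutation_apply) (use i in auto)
    then show ?thesis using i unfolding shiftp_def by simp
  next
    case False
    hence "j \<notin> (+) k ` {..<l}" by auto
    then show ?thesis using False unfolding shiftp_def map_permutation_def restrict_id_def by auto
  qed
qed

lemma shiftp_permutes:
  assumes "\<rho> permutes {..<l}"
  shows "shiftp k l \<rho> permutes {k..<k+l}"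
proof -
  have "bij_betw ((+) k) {..<l} {k..<k+l}"
    unfolding bij_betw_def
    apply (auto simp: image_iff)
    apply (rule_tac x="x - k" in bexI)
     apply auto
    done
  from map_permutation_permutes[OF this assms] show ?thesis
    unfolding shiftp_map[OF assms] .
qed

lemma shiftp_sign:
  assumes "\<rho> permutes {..<l}"
  shows "sign (shiftp k l \<rho>) = sign \<rho>"
  unfolding shiftp_map[OF assms] by (rule sign_map_permutation) (use assms in auto)

lemma perm_comp_sign2:
  assumes "\<pi>1 permutes {..<k}" "\<pi>2 permutes {..<l}"
  shows "sign (\<pi>1 \<circ> shiftp k l \<pi>2) = sign \<pi>1 * sign \<pi>2"
proof -
  have "permutation \<pi>1" using permutes_imp_permutation[of "{..<k}" \<pi>1] assms by simp
  moreover have "permutation (shiftp k l \<pi>2)"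
    using permutes_imp_permutation[of "{k..<k+l}"] shiftp_permutes[OF assms(2)] by simp
  ultimately show ?thesis by (simp add: sign_compose shiftp_sign[OF assms(2)])
qed

lemma of_int_sign_sq: "(of_int (sign p) :: 'a::ring_1) * of_int (sign p) = 1"
  by (metis of_int_mult sign_idempotent of_int_1)

lemma alt_form_1: "alt_form 1 f"
  unfolding alt_form_def
proof (intro allI impI)
  fix \<pi> :: "nat \<Rightarrow> nat" and V assume \<pi>: "\<pi> permutes {..<1}"
  have "\<pi> = id"
  proof
    fix i show "\<pi> i = id i"
    proof (cases "i = 0")
      case True
      have "\<pi> 0 \<in> {..<1}" using permutes_in_image[OF \<pi>] by simp
      then show ?thesis using True by simp
    next
      case False then show ?thesis using permutes_not_in[OF \<pi>] by simp
    qed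
  qed
  then show "f (\<lambda>i. V (\<pi> i)) = of_int (sign \<pi>) * f V" by simp
qed

lemma alt_form_0: "alt_form 0 f"
  unfolding alt_form_def by simp

lemma wedge_block:
  assumes la: "local_form k \<alpha>" and aa: "alt_form k \<alpha>"
    and lb: "local_form l \<beta>" and ab: "alt_form l \<beta>"
    and Z: "\<And>\<sigma>. \<sigma> permutes {..<k+l} \<Longrightarrow> \<exists>i<k. k \<le> \<sigma> i \<Longrightarrow>
               \<alpha> (\<lambda>i. V (\<sigma> i)) * \<beta> (\<lambda>i. V (\<sigma> (k+i))) = 0"
  shows "wedge k l \<alpha> \<beta> V = \<alpha> V * \<beta> (\<lambda>i. V (k+i))"
proof -
  define W where "W = (\<lambda>i. V (k+i))"
  define T where "T = (\<lambda>\<sigma>. (of_int (sign \<sigma>)::complex) * \<alpha> (\<lambda>i. V (\<sigma> i)) * \<beta> (\<lambda>i. V (\<sigma> (k + i))))"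
  define S where "S = {\<sigma>. \<sigma> permutes {..<k+l}}"
  define B where "B = {\<sigma>. \<sigma> permutes {..<k+l} \<and> (\<forall>i<k. \<sigma> i < k)}"
  define Pk where "Pk = {\<pi>. \<pi> permutes {..<k}}"
  define Pl where "Pl = {\<pi>. \<pi> permutes {..<l}}"
  define \<Phi> where "\<Phi> = (\<lambda>(\<pi>1::nat\<Rightarrow>nat, \<pi>2::nat\<Rightarrow>nat). \<pi>1 \<circ> shiftp k l \<pi>2)"
  have finS: "finite S" unfolding S_def by (rule finite_permutations) simp
  have BS: "B \<subseteq> S" unfolding B_def S_def by auto
  have zero: "\<And>\<sigma>. \<sigma> \<in> S - B \<Longrightarrow> T \<sigma> = 0"
  proof -
    fix \<sigma> assume "\<sigma> \<in> S - B"
    hence s: "\<sigma> permutes {..<k+l}" and "\<exists>i<k. k \<le> \<sigma> i" unfolding S_def B_def by auto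
    then show "T \<sigma> = 0" using Z[OF s] unfolding T_def by (simp add: mult.assoc)
  qed
  have sumS: "sum T S = sum T B"
    using sum.mono_neutral_right[OF finS BS] zero by auto
  have phi_apply1: "\<And>\<pi>1 \<pi>2 i. \<pi>1 permutes {..<k} \<Longrightarrow> i < k \<Longrightarrow> \<Phi> (\<pi>1, \<pi>2) i = \<pi>1 i"
    unfolding \<Phi>_def shiftp_def by simp
  have phi_apply2: "\<And>\<pi>1 \<pi>2 i. \<pi>1 permutes {..<k} \<Longrightarrow> \<pi>2 permutes {..<l} \<Longrightarrow> i < l \<Longrightarrow> \<Phi> (\<pi>1, \<pi>2) (k+i) = k + \<pi>2 i"
  proof -
    fix \<pi>1 \<pi>2 i assume p1: "\<pi>1 permutes {..<k}" and p2: "\<pi>2 permutes {..<l}" and i: "i < l"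
    have "\<Phi> (\<pi>1, \<pi>2) (k+i) = \<pi>1 (k + \<pi>2 i)" unfolding \<Phi>_def shiftp_def using i by simp
    also have "\<dots> = k + \<pi>2 i" by (rule permutes_not_in[OF p1]) simp
    finally show "\<Phi> (\<pi>1, \<pi>2) (k+i) = k + \<pi>2 i" .
  qed
  have phi_apply3: "\<And>\<pi>1 \<pi>2 i. \<pi>1 permutes {..<k} \<Longrightarrow> \<pi>2 permutes {..<l} \<Longrightarrow> k + l \<le> i \<Longrightarrow> \<Phi> (\<pi>1, \<pi>2) i = i"
    unfolding \<Phi>_def shiftp_def using permutes_not_in by fastforce
  have inj: "inj_on \<Phi> (Pk \<times> Pl)"
  proof (rule inj_onI)
    fix x y assume A0: "x \<in> Pk \<times> Pl" "y \<in> Pk \<times> Pl" and E0: "\<Phi> x = \<Phi> y"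
    obtain \<pi>1 \<pi>2 where x: "x = (\<pi>1, \<pi>2)" by (cases x)
    obtain \<pi>1' \<pi>2' where y: "y = (\<pi>1', \<pi>2')" by (cases y)
    have A: "(\<pi>1, \<pi>2) \<in> Pk \<times> Pl" "(\<pi>1', \<pi>2') \<in> Pk \<times> Pl" using A0 x y by auto
    have E: "\<Phi> (\<pi>1, \<pi>2) = \<Phi> (\<pi>1', \<pi>2')" using E0 x y by simp
    have p: "\<pi>1 permutes {..<k}" "\<pi>2 permutes {..<l}" "\<pi>1' permutes {..<k}" "\<pi>2' permutes {..<l}"
      using A unfolding Pk_def Pl_def by auto
    have "\<pi>1 = \<pi>1'"
    proof
      fix i show "\<pi>1 i = \<pi>1' i"
      proof (cases "i < k")
        case True then show ?thesis using phi_apply1[OF p(1), of i \<pi>2] phi_apply1[OF p(3), of i \<pi>2'] E by simp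
      next
        case False then show ?thesis using permutes_not_in[OF p(1)] permutes_not_in[OF p(3)] by simp
      qed
    qed
    moreover have "\<pi>2 = \<pi>2'"
    proof
      fix i show "\<pi>2 i = \<pi>2' i"
      proof (cases "i < l")
        case True then show ?thesis using phi_apply2[OF p(1,2) True] phi_apply2[OF p(3,4) True] E by simp
      next
        case False then show ?thesis using permutes_not_in[OF p(2)] permutes_not_in[OF p(4)] by simp
      qed
    qed
    ultimately show "x = y" using x y by simp
  qed
  have img: "\<Phi> ` (Pk \<times> Pl) = B"
  proof
    show "\<Phi> ` (Pk \<times> Pl) \<subseteq> B"
    proof
      fix \<sigma> assume "\<sigma> \<in> \<Phi> ` (Pk \<times> Pl)"
      then obtain \<pi>1 \<pi>2 where \<sigma>: "\<sigma> = \<Phi> (\<pi>1, \<pi>2)" and "(\<pi>1, \<pi>2) \<in> Pk \<times> Pl" by auto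
      hence p: "\<pi>1 permutes {..<k}" "\<pi>2 permutes {..<l}" unfolding Pk_def Pl_def by auto
      have "\<pi>1 permutes {..<k+l}" by (rule permutes_subset[OF p(1)]) auto
      moreover have "shiftp k l \<pi>2 permutes {..<k+l}" by (rule permutes_subset[OF shiftp_permutes[OF p(2)]]) auto
      ultimately have "\<Phi> (\<pi>1, \<pi>2) permutes {..<k+l}" unfolding \<Phi>_def by (simp add: permutes_compose)
      moreover have "\<forall>i<k. \<Phi> (\<pi>1, \<pi>2) i < k"
        using phi_apply1[OF p(1)] permutes_in_image[OF p(1)] by simp
      ultimately show "\<sigma> \<in> B" unfolding B_def \<sigma> by simp
    qed
    show "B \<subseteq> \<Phi> ` (Pk \<times> Pl)"
    proof
      fix \<sigma> assume "\<sigma> \<in> B"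
      hence s: "\<sigma> permutes {..<k+l}" and sk: "\<forall>i<k. \<sigma> i < k" unfolding B_def by auto
      have injs: "inj \<sigma>" using permutes_inj[OF s] .
      have imk: "\<sigma> ` {..<k} = {..<k}"
        by (rule endo_inj_surj) (use sk injs in \<open>auto simp: inj_on_def\<close>)
      have ge: "\<And>i. i < l \<Longrightarrow> k \<le> \<sigma> (k+i)"
      proof (rule ccontr)
        fix i assume i: "i < l" and "\<not> k \<le> \<sigma> (k+i)"
        hence "\<sigma> (k+i) \<in> \<sigma> ` {..<k}" using imk by auto
        then obtain j where "j < k" "\<sigma> (k+i) = \<sigma> j" by auto
        then show False using injs by (auto dest: injD)
      qed
      have lt: "\<And>i. i < l \<Longrightarrow> \<sigma> (k+i) < k + l" using permutes_in_image[OF s] by simp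
      define \<pi>1 where "\<pi>1 = (\<lambda>i. if i < k then \<sigma> i else i)"
      define \<pi>2 where "\<pi>2 = (\<lambda>i. if i < l then \<sigma> (k+i) - k else i)"
      have p1: "\<pi>1 permutes {..<k}"
      proof (rule bij_imp_permutes)
        have "inj_on \<pi>1 {..<k}" unfolding \<pi>1_def inj_on_def using injs by (auto dest: injD)
        moreover have "\<pi>1 ` {..<k} = {..<k}" unfolding \<pi>1_def using imk by auto
        ultimately show "bij_betw \<pi>1 {..<k} {..<k}" unfolding bij_betw_def by simp
      qed (simp add: \<pi>1_def)
      have p2: "\<pi>2 permutes {..<l}"
      proof (rule bij_imp_permutes)
        have i2: "inj_on \<pi>2 {..<l}"
        proof (rule inj_onI)
          fix a b assume "a \<in> {..<l}" "b \<in> {..<l}" "\<pi>2 a = \<pi>2 b"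
          then have "\<sigma> (k+a) - k = \<sigma> (k+b) - k" "a < l" "b < l" unfolding \<pi>2_def by auto
          then have "\<sigma> (k+a) = \<sigma> (k+b)" using ge[of a] ge[of b] by linarith
          then show "a = b" using injs by (auto dest: injD)
        qed
        moreover have "\<pi>2 ` {..<l} \<subseteq> {..<l}" unfolding \<pi>2_def using ge lt by fastforce
        ultimately have "\<pi>2 ` {..<l} = {..<l}" by (intro endo_inj_surj) auto
        then show "bij_betw \<pi>2 {..<l} {..<l}" using i2 unfolding bij_betw_def by simp
      qed (simp add: \<pi>2_def)
      have "\<sigma> = \<Phi> (\<pi>1, \<pi>2)"
      proof
        fix j show "\<sigma> j = \<Phi> (\<pi>1, \<pi>2) j"
        proof (cases "j < k")
          case True then show ?thesis using phi_apply1[OF p1 True] \<pi>1_def by simp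
        next
          case False
          show ?thesis
          proof (cases "j < k + l")
            case True
            then obtain i where i: "j = k + i" "i < l" using False by (metis add_less_cancel_left le_add_diff_inverse not_less)
            show ?thesis using phi_apply2[OF p1 p2 i(2)] i ge[OF i(2)] unfolding \<pi>2_def by simp
          next
            case False
            then show ?thesis using phi_apply3[OF p1 p2] permutes_not_in[OF s] by simp
          qed
        qed
      qed
      moreover have "(\<pi>1, \<pi>2) \<in> Pk \<times> Pl" using p1 p2 unfolding Pk_def Pl_def by simp
      ultimately show "\<sigma> \<in> \<Phi> ` (Pk \<times> Pl)" by blast
    qed
  qed
  have termeq: "\<And>x. x \<in> Pk \<times> Pl \<Longrightarrow> T (\<Phi> x) = \<alpha> V * \<beta> W"
  proof -
    fix x assume x0: "x \<in> Pk \<times> Pl"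
    obtain \<pi>1 \<pi>2 where x: "x = (\<pi>1, \<pi>2)" by (cases x)
    have "(\<pi>1, \<pi>2) \<in> Pk \<times> Pl" using x0 x by simp
    hence p: "\<pi>1 permutes {..<k}" "\<pi>2 permutes {..<l}" unfolding Pk_def Pl_def by auto
    have sg: "sign (\<Phi> (\<pi>1, \<pi>2)) = sign \<pi>1 * sign \<pi>2"
      unfolding \<Phi>_def using perm_comp_sign2[OF p] by simp
    have a: "\<alpha> (\<lambda>i. V (\<Phi> (\<pi>1, \<pi>2) i)) = \<alpha> (\<lambda>i. V (\<pi>1 i))"
      using la[unfolded local_form_def, rule_format, of "\<lambda>i. V (\<Phi> (\<pi>1, \<pi>2) i)" "\<lambda>i. V (\<pi>1 i)"]
        phi_apply1[OF p(1)] by simp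
    also have "\<dots> = of_int (sign \<pi>1) * \<alpha> V" using aa p(1) unfolding alt_form_def by simp
    finally have a: "\<alpha> (\<lambda>i. V (\<Phi> (\<pi>1, \<pi>2) i)) = of_int (sign \<pi>1) * \<alpha> V" .
    have "\<beta> (\<lambda>i. V (\<Phi> (\<pi>1, \<pi>2) (k+i))) = \<beta> (\<lambda>i. W (\<pi>2 i))"
      using lb[unfolded local_form_def, rule_format, of "\<lambda>i. V (\<Phi> (\<pi>1, \<pi>2) (k+i))" "\<lambda>i. W (\<pi>2 i)"]
        phi_apply2[OF p] unfolding W_def by simp
    also have "\<dots> = of_int (sign \<pi>2) * \<beta> W" using ab p(2) unfolding alt_form_def by simp
    finally have b: "\<beta> (\<lambda>i. V (\<Phi> (\<pi>1, \<pi>2) (k+i))) = of_int (sign \<pi>2) * \<beta> W" .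
    have ss: "(of_int (sign \<pi>1 * sign \<pi>2) :: complex) * (of_int (sign \<pi>1) * of_int (sign \<pi>2)) = 1"
    proof -
      have "(of_int (sign \<pi>1 * sign \<pi>2) :: complex) * (of_int (sign \<pi>1) * of_int (sign \<pi>2))
           = (of_int (sign \<pi>1) * of_int (sign \<pi>1)) * (of_int (sign \<pi>2) * of_int (sign \<pi>2))"
        by (simp only: of_int_mult mult_ac)
      also have "\<dots> = 1" by (simp only: of_int_sign_sq) simp
      finally show ?thesis .
    qed
    have "T (\<Phi> (\<pi>1, \<pi>2)) = (of_int (sign \<pi>1 * sign \<pi>2) * (of_int (sign \<pi>1) * of_int (sign \<pi>2))) * (\<alpha> V * \<beta> W)"
      unfolding T_def sg a b by (simp add: algebra_simps)
    then show "T (\<Phi> x) = \<alpha> V * \<beta> W" using ss x by simp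
  qed
  have "sum T B = sum (T \<circ> \<Phi>) (Pk \<times> Pl)"
    using sum.reindex[OF inj, of T] img by simp
  also have "\<dots> = of_nat (card (Pk \<times> Pl)) * (\<alpha> V * \<beta> W)"
    using termeq by simp
  also have "card (Pk \<times> Pl) = fact k * fact l"
    unfolding Pk_def Pl_def card_cartesian_product
    by (simp add: card_permutations)
  finally have "sum T S = of_nat (fact k * fact l) * (\<alpha> V * \<beta> W)" using sumS by simp
  then show ?thesis unfolding wedge_def T_def S_def W_def by simp
qed


lemma prod_split_add: "(\<Prod>i<k+l. f i) = (\<Prod>i<k. f i) * (\<Prod>i<l. f (k+i))"
  for f :: "nat \<Rightarrow> 'a::comm_monoid_mult"
proof -
  have "(\<Prod>i<k+l. f i) = (\<Prod>i\<in>{0..<k}. f i) * (\<Prod>i\<in>{k..<k+l}. f i)"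
    by (simp add: prod.atLeastLessThan_concat lessThan_atLeast0)
  also have "(\<Prod>i\<in>{k..<k+l}. f i) = (\<Prod>i<l. f (k+i))"
    using prod.shift_bounds_nat_ivl[of f 0 k l] by (simp add: lessThan_atLeast0 add.commute)
  finally show ?thesis by (simp add: lessThan_atLeast0)
qed

lemma wedge_hom:
  assumes "hom_form k \<alpha>" "hom_form l \<beta>"
  shows "hom_form (k+l) (wedge k l \<alpha> \<beta>)"
  unfolding hom_form_def
proof (intro allI)
  fix V :: "nat \<Rightarrow> complex^'a" and r :: "nat \<Rightarrow> real"
  have eq: "\<And>\<sigma>. \<sigma> permutes {..<k+l} \<Longrightarrow>
     (of_int (sign \<sigma>)::complex) * \<alpha> (\<lambda>i. r (\<sigma> i) *\<^sub>R V (\<sigma> i)) * \<beta> (\<lambda>i. r (\<sigma> (k+i)) *\<^sub>R V (\<sigma> (k + i)))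
   = of_real (\<Prod>i<k+l. r i) * (of_int (sign \<sigma>) * \<alpha> (\<lambda>i. V (\<sigma> i)) * \<beta> (\<lambda>i. V (\<sigma> (k + i))))"
  proof -
    fix \<sigma> assume \<sigma>: "\<sigma> permutes {..<k+l}"
    have a: "\<alpha> (\<lambda>i. r (\<sigma> i) *\<^sub>R V (\<sigma> i)) = of_real (\<Prod>i<k. r (\<sigma> i)) * \<alpha> (\<lambda>i. V (\<sigma> i))"
      using assms(1)[unfolded hom_form_def, rule_format, of "\<lambda>i. r (\<sigma> i)" "\<lambda>i. V (\<sigma> i)"] .
    have b: "\<beta> (\<lambda>i. r (\<sigma> (k+i)) *\<^sub>R V (\<sigma> (k+i))) = of_real (\<Prod>i<l. r (\<sigma> (k+i))) * \<beta> (\<lambda>i. V (\<sigma> (k+i)))"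
      using assms(2)[unfolded hom_form_def, rule_format, of "\<lambda>i. r (\<sigma> (k+i))" "\<lambda>i. V (\<sigma> (k+i))"] .
    have "(\<Prod>i<k. r (\<sigma> i)) * (\<Prod>i<l. r (\<sigma> (k+i))) = (\<Prod>i<k+l. r (\<sigma> i))"
      using prod_split_add[of "\<lambda>i. r (\<sigma> i)" k l] by simp
    also have "\<dots> = (\<Prod>i<k+l. r i)" using prod.permute[OF \<sigma>, of r] by (simp add: o_def)
    finally have p: "(\<Prod>i<k. r (\<sigma> i)) * (\<Prod>i<l. r (\<sigma> (k+i))) = (\<Prod>i<k+l. r i)" .
    show "?thesis \<sigma>" unfolding a b p[symmetric] of_real_mult by (simp add: mult_ac)
  qed
  have S: "(\<Sum>\<sigma>\<in>{\<sigma>. \<sigma> permutes {..<k+l}}. (of_int (sign \<sigma>)::complex) * \<alpha> (\<lambda>i. r (\<sigma> i) *\<^sub>R V (\<sigma> i)) * \<beta> (\<lambda>i. r (\<sigma> (k+i)) *\<^sub>R V (\<sigma> (k + i))))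
     = of_real (\<Prod>i<k+l. r i) * (\<Sum>\<sigma>\<in>{\<sigma>. \<sigma> permutes {..<k+l}}. of_int (sign \<sigma>) * \<alpha> (\<lambda>i. V (\<sigma> i)) * \<beta> (\<lambda>i. V (\<sigma> (k + i))))"
    unfolding sum_distrib_left by (rule sum.cong) (simp_all add: eq)
  show "wedge k l \<alpha> \<beta> (\<lambda>i. r i *\<^sub>R V i) = of_real (\<Prod>i<k+l. r i) * wedge k l \<alpha> \<beta> V"
    unfolding wedge_def S by simp
qed

lemma wedge_vanish:
  assumes "vanish_on k Z \<alpha>" "vanish_on l Z \<beta>"
  shows "vanish_on (k+l) Z (wedge k l \<alpha> \<beta>)"
  unfolding vanish_on_def
proof (intro allI impI)
  fix V :: "nat \<Rightarrow> complex^'a" assume "\<exists>i<k+l. V i \<in> Z"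
  then obtain i where i: "i < k+l" "V i \<in> Z" by blast
  have z: "\<And>\<sigma>. \<sigma> permutes {..<k+l} \<Longrightarrow> \<alpha> (\<lambda>i. V (\<sigma> i)) * \<beta> (\<lambda>i. V (\<sigma> (k + i))) = 0"
  proof -
    fix \<sigma> assume \<sigma>: "\<sigma> permutes {..<k+l}"
    define j where "j = inv \<sigma> i"
    have sj: "\<sigma> j = i" unfolding j_def using permutes_inverses(1)[OF \<sigma>] by simp
    have jl: "j < k + l" unfolding j_def using permutes_in_image[OF permutes_inv[OF \<sigma>]] i by simp
    show "\<alpha> (\<lambda>i. V (\<sigma> i)) * \<beta> (\<lambda>i. V (\<sigma> (k + i))) = 0"
    proof (cases "j < k")
      case True
      have "\<alpha> (\<lambda>i. V (\<sigma> i)) = 0"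
        using assms(1)[unfolded vanish_on_def, rule_format, of "\<lambda>i. V (\<sigma> i)"] True sj i by auto
      then show ?thesis by simp
    next
      case False
      have "\<beta> (\<lambda>i. V (\<sigma> (k + i))) = 0"
        using assms(2)[unfolded vanish_on_def, rule_format, of "\<lambda>i. V (\<sigma> (k+i))"]
        using False sj i jl by (metis add_diff_inverse_nat add_less_cancel_left)
      then show ?thesis by simp
    qed
  qed
  have "(\<Sum>\<sigma> | \<sigma> permutes {..<k+l}. (of_int (sign \<sigma>)::complex) * \<alpha> (\<lambda>i. V (\<sigma> i)) * \<beta> (\<lambda>i. V (\<sigma> (k + i)))) = 0"
    by (rule sum.neutral) (use z in \<open>simp add: mult.assoc\<close>)
  then show "wedge k l \<alpha> \<beta> V = 0" unfolding wedge_def by simp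
qed

definition oneform :: "(complex^'m::finite \<Rightarrow> complex) \<Rightarrow> 'm cform" where
  "oneform L = (\<lambda>v. L (v 0))"

lemma oneform_local: "local_form 1 (oneform L)"
  unfolding local_form_def oneform_def by simp

lemma oneform_hom: "(\<And>r x. L (r *\<^sub>R x) = of_real r * L x) \<Longrightarrow> hom_form 1 (oneform L)"
  unfolding hom_form_def oneform_def by simp

lemma oneform_vanish: "(\<And>x. x \<in> Z \<Longrightarrow> L x = 0) \<Longrightarrow> vanish_on 1 Z (oneform L)"
  unfolding vanish_on_def oneform_def by auto

lemma wedge_list_local: "(\<forall>\<alpha>\<in>set \<alpha>s. local_form 1 \<alpha>) \<Longrightarrow> local_form (length \<alpha>s) (wedge_list \<alpha>s)"
proof (induction \<alpha>s)
  case Nil then show ?case unfolding local_form_def by simp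
next
  case (Cons \<alpha> \<alpha>s) then show ?case using wedge_local[of 1 \<alpha> "length \<alpha>s" "wedge_list \<alpha>s"] by simp
qed

lemma wedge_list_alt: "alt_form (length \<alpha>s) (wedge_list \<alpha>s)"
proof (cases \<alpha>s)
  case Nil then show ?thesis by (simp add: alt_form_0)
next
  case (Cons \<alpha> \<beta>s) then show ?thesis using wedge_alt[of 1 "length \<beta>s" \<alpha> "wedge_list \<beta>s"] by simp
qed

lemma wedge_list_hom: "(\<forall>\<alpha>\<in>set \<alpha>s. hom_form 1 \<alpha>) \<Longrightarrow> hom_form (length \<alpha>s) (wedge_list \<alpha>s)"
proof (induction \<alpha>s)
  case Nil then show ?case unfolding hom_form_def by simp
next
  case (Cons \<alpha> \<alpha>s) then show ?case using wedge_hom[of 1 \<alpha> "length \<alpha>s" "wedge_list \<alpha>s"] by simp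
qed

lemma wedge_list_vanish: "(\<forall>\<alpha>\<in>set \<alpha>s. vanish_on 1 Z \<alpha>) \<Longrightarrow> vanish_on (length \<alpha>s) Z (wedge_list \<alpha>s)"
proof (induction \<alpha>s)
  case Nil then show ?case unfolding vanish_on_def by simp
next
  case (Cons \<alpha> \<alpha>s) then show ?case using wedge_vanish[of 1 Z \<alpha> "length \<alpha>s" "wedge_list \<alpha>s"] by simp
qed

lemma wedge_list2_local: "(\<forall>\<alpha>\<in>set \<alpha>s. local_form 2 \<alpha>) \<Longrightarrow> local_form (2 * length \<alpha>s) (wedge_list2 \<alpha>s)"
proof (induction \<alpha>s)
  case Nil then show ?case unfolding local_form_def by simp
next
  case (Cons \<alpha> \<alpha>s) then show ?case using wedge_local[of 2 \<alpha> "2 * length \<alpha>s" "wedge_list2 \<alpha>s"] by simp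
qed

lemma wedge_list2_alt: "alt_form (2 * length \<alpha>s) (wedge_list2 \<alpha>s)"
proof (cases \<alpha>s)
  case Nil then show ?thesis by (simp add: alt_form_0)
next
  case (Cons \<alpha> \<beta>s) then show ?thesis using wedge_alt[of 2 "2 * length \<beta>s" \<alpha> "wedge_list2 \<beta>s"] by simp
qed

lemma cnj_form_local: "local_form d \<psi> \<Longrightarrow> local_form d (cnj_form \<psi>)"
  unfolding local_form_def cnj_form_def by metis

lemma cnj_form_alt: "alt_form d \<psi> \<Longrightarrow> alt_form d (cnj_form \<psi>)"
  unfolding alt_form_def cnj_form_def by simp

lemma cnj_form_vanish: "vanish_on d Z \<psi> \<Longrightarrow> vanish_on d Z (cnj_form \<psi>)"
  unfolding vanish_on_def cnj_form_def by simp

lemma scale_local: "local_form d f \<Longrightarrow> local_form d (\<lambda>v. c * f v)"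
  unfolding local_form_def by metis

lemma scale_alt: "alt_form d f \<Longrightarrow> alt_form d (\<lambda>v. c * f v)"
  unfolding alt_form_def by (simp add: mult_ac)

lemma scale_vanish: "vanish_on d Z f \<Longrightarrow> vanish_on d Z (\<lambda>v. c * f v)"
  unfolding vanish_on_def by simp

lemma dz_local: "local_form 1 (dz j)" unfolding dz_def local_form_def by simp
lemma dzbar_local: "local_form 1 (dzbar j)" unfolding dzbar_def local_form_def by simp
lemma dz_hom: "hom_form 1 (dz j)" unfolding dz_def hom_form_def
  by (simp only: vector_scaleR_component) (simp add: scaleR_conv_of_real)
lemma dzbar_hom: "hom_form 1 (dzbar j)" unfolding dzbar_def hom_form_def
  by (simp only: vector_scaleR_component) (simp add: scaleR_conv_of_real)

definition ppw :: "nat \<Rightarrow> (nat \<Rightarrow> 'm) \<Rightarrow> (nat \<Rightarrow> 'm) \<Rightarrow> ('m::finite) cform" where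
  "ppw p a b = wedge p p (wedge_list (map (\<lambda>i. dz (a i)) [0..<p])) (wedge_list (map (\<lambda>i. dzbar (b i)) [0..<p]))"

lemma ppw_local: "local_form (2*p) (ppw p a b)"
  unfolding ppw_def mult_2
  by (rule wedge_local) (use wedge_list_local[of "map (\<lambda>i. dz (a i)) [0..<p]"] wedge_list_local[of "map (\<lambda>i. dzbar (b i)) [0..<p]"] dz_local dzbar_local in auto)

lemma ppw_alt: "alt_form (2*p) (ppw p a b)"
  unfolding ppw_def mult_2 by (rule wedge_alt)

lemma ppw_hom: "hom_form (2*p) (ppw p a b)"
  unfolding ppw_def mult_2
  by (rule wedge_hom) (use wedge_list_hom[of "map (\<lambda>i. dz (a i)) [0..<p]"] wedge_list_hom[of "map (\<lambda>i. dzbar (b i)) [0..<p]"] dz_hom dzbar_hom in auto)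

lemma pp_shape:
  assumes "is_pp_covector p \<alpha>"
  obtains c where "\<alpha> = (\<lambda>v. \<Sum>a\<in>{..<p} \<rightarrow>\<^sub>E (UNIV :: 'm::finite set). \<Sum>b\<in>{..<p} \<rightarrow>\<^sub>E (UNIV :: 'm set). c a b * ppw p a b v)"
  using assms unfolding is_pp_covector_def ppw_def by blast

lemma pp_local: "is_pp_covector p (\<alpha>::('m::finite) cform) \<Longrightarrow> local_form (2*p) \<alpha>"
proof -
  assume "is_pp_covector p \<alpha>"
  then obtain c where \<alpha>: "\<alpha> = (\<lambda>v. \<Sum>a\<in>{..<p} \<rightarrow>\<^sub>E (UNIV :: 'm set). \<Sum>b\<in>{..<p} \<rightarrow>\<^sub>E (UNIV :: 'm set). c a b * ppw p a b v)"
    by (rule pp_shape)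
  show ?thesis unfolding local_form_def \<alpha>
  proof (intro allI impI)
    fix V V' :: "nat \<Rightarrow> complex^'m" assume H: "\<forall>i<2*p. V i = V' i"
    have "\<And>a b. ppw p a b V = ppw p a b V'"
      using ppw_local[unfolded local_form_def] H by blast
    then show "(\<Sum>a\<in>{..<p} \<rightarrow>\<^sub>E UNIV. \<Sum>b\<in>{..<p} \<rightarrow>\<^sub>E UNIV. c a b * ppw p a b V) =
               (\<Sum>a\<in>{..<p} \<rightarrow>\<^sub>E UNIV. \<Sum>b\<in>{..<p} \<rightarrow>\<^sub>E UNIV. c a b * ppw p a b V')" by simp
  qed
qed

lemma pp_alt: "is_pp_covector p (\<alpha>::('m::finite) cform) \<Longrightarrow> alt_form (2*p) \<alpha>"
proof -
  assume "is_pp_covector p \<alpha>"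
  then obtain c where \<alpha>: "\<alpha> = (\<lambda>v. \<Sum>a\<in>{..<p} \<rightarrow>\<^sub>E (UNIV :: 'm set). \<Sum>b\<in>{..<p} \<rightarrow>\<^sub>E (UNIV :: 'm set). c a b * ppw p a b v)"
    by (rule pp_shape)
  show ?thesis unfolding alt_form_def \<alpha>
  proof (intro allI impI)
    fix \<pi> and V :: "nat \<Rightarrow> complex^'m" assume \<pi>: "\<pi> permutes {..<2*p}"
    have "\<And>a b. ppw p a b (\<lambda>i. V (\<pi> i)) = of_int (sign \<pi>) * ppw p a b V"
      using ppw_alt[unfolded alt_form_def] \<pi> by blast
    then show "(\<Sum>a\<in>{..<p} \<rightarrow>\<^sub>E UNIV. \<Sum>b\<in>{..<p} \<rightarrow>\<^sub>E UNIV. c a b * ppw p a b (\<lambda>i. V (\<pi> i))) =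
               of_int (sign \<pi>) * (\<Sum>a\<in>{..<p} \<rightarrow>\<^sub>E UNIV. \<Sum>b\<in>{..<p} \<rightarrow>\<^sub>E UNIV. c a b * ppw p a b V)"
      by (simp add: sum_distrib_left mult_ac)
  qed
qed

lemma pp_hom: "is_pp_covector p (\<alpha>::('m::finite) cform) \<Longrightarrow> hom_form (2*p) \<alpha>"
proof -
  assume "is_pp_covector p \<alpha>"
  then obtain c where \<alpha>: "\<alpha> = (\<lambda>v. \<Sum>a\<in>{..<p} \<rightarrow>\<^sub>E (UNIV :: 'm set). \<Sum>b\<in>{..<p} \<rightarrow>\<^sub>E (UNIV :: 'm set). c a b * ppw p a b v)"
    by (rule pp_shape)
  show ?thesis unfolding hom_form_def \<alpha>
  proof (intro allI)
    fix r and V :: "nat \<Rightarrow> complex^'m"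
    have "\<And>a b. ppw p a b (\<lambda>i. r i *\<^sub>R V i) = of_real (\<Prod>i<2*p. r i) * ppw p a b V"
      using ppw_hom[unfolded hom_form_def] by blast
    then show "(\<Sum>a\<in>{..<p} \<rightarrow>\<^sub>E UNIV. \<Sum>b\<in>{..<p} \<rightarrow>\<^sub>E UNIV. c a b * ppw p a b (\<lambda>i. r i *\<^sub>R V i)) =
               of_real (\<Prod>i<2*p. r i) * (\<Sum>a\<in>{..<p} \<rightarrow>\<^sub>E UNIV. \<Sum>b\<in>{..<p} \<rightarrow>\<^sub>E UNIV. c a b * ppw p a b V)"
      by (simp add: sum_distrib_left mult_ac)
  qed
qed


definition pairU :: "'m list \<Rightarrow> nat \<Rightarrow> complex^'m::finite" where
  "pairU ks i = axis (ks ! (i div 2)) (if even i then 1 else \<i>)"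

definition dxdy :: "'m \<Rightarrow> ('m::finite) cform" where
  "dxdy j = wedge 1 1 (dx j) (dy j)"

lemma dx_oneform: "dx j = oneform (\<lambda>x. of_real (Re (x $ j)))"
  unfolding dx_def oneform_def by simp
lemma dy_oneform: "dy j = oneform (\<lambda>x. of_real (Im (x $ j)))"
  unfolding dy_def oneform_def by simp

lemma dxdy_local: "local_form 2 (dxdy j)"
  unfolding dxdy_def dx_oneform dy_oneform one_add_one[symmetric] by (rule wedge_local[OF oneform_local oneform_local])

lemma dxdy_alt: "alt_form 2 (dxdy j)"
  unfolding dxdy_def one_add_one[symmetric] by (rule wedge_alt)

lemma dxdy_vanish: "vanish_on 2 {v. v $ j = 0} (dxdy j)"
proof -
  have "vanish_on (1+1) {v. v $ j = 0} (wedge 1 1 (dx j) (dy j))"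
    unfolding dx_oneform dy_oneform by (intro wedge_vanish oneform_vanish) auto
  then show ?thesis unfolding dxdy_def one_add_one .
qed

lemma dxdy_eval:
  assumes "V 0 = axis j 1" "V 1 = axis j \<i>"
  shows "dxdy j V = 1"
proof -
  have "wedge 1 1 (dx j) (dy j) V = dx j V * dy j (\<lambda>i. V (1+i))"
  proof (rule wedge_block)
    show "local_form 1 (dx j)" "local_form 1 (dy j)" unfolding dx_oneform dy_oneform by (rule oneform_local)+
    show "alt_form 1 (dx j)" "alt_form 1 (dy j)" by (rule alt_form_1)+
    fix \<sigma> :: "nat \<Rightarrow> nat" assume s: "\<sigma> permutes {..<1+1}" and "\<exists>i<1. 1 \<le> \<sigma> i"
    hence "1 \<le> \<sigma> 0" by auto
    moreover have "\<sigma> 0 < 2" using permutes_in_image[OF s, of 0] by simp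
    ultimately have "\<sigma> 0 = 1" by simp
    then show "dx j (\<lambda>i. V (\<sigma> i)) * dy j (\<lambda>i. V (\<sigma> (1+i))) = 0"
      unfolding dx_def using assms by simp
  qed
  then show ?thesis unfolding dxdy_def dx_def dy_def using assms by simp
qed

lemma pairU_Cons2: "pairU (j # ks) (Suc (Suc i)) = pairU ks i"
  unfolding pairU_def by simp

lemma wedge_list2_local_dxdy: "local_form (2 * length ks) (wedge_list2 (map dxdy ks))"
  using wedge_list2_local[of "map dxdy ks"] by (simp add: dxdy_local)

lemma wedge_list2_eval:
  "distinct ks \<Longrightarrow> wedge_list2 (map dxdy ks) (pairU ks) = 1"
proof (induction ks)
  case Nil then show ?case by simp
next
  case (Cons j ks)
  let ?V = "pairU (j # ks)"
  have "wedge 2 (2 * length ks) (dxdy j) (wedge_list2 (map dxdy ks)) ?V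
        = dxdy j ?V * wedge_list2 (map dxdy ks) (\<lambda>i. ?V (2+i))"
  proof (rule wedge_block)
    show "local_form 2 (dxdy j)" "alt_form 2 (dxdy j)" by (rule dxdy_local, rule dxdy_alt)
    show "local_form (2 * length ks) (wedge_list2 (map dxdy ks))" by (rule wedge_list2_local_dxdy)
    show "alt_form (2 * length ks) (wedge_list2 (map dxdy ks))" using wedge_list2_alt[of "map dxdy ks"] by simp
    fix \<sigma> :: "nat \<Rightarrow> nat" assume s: "\<sigma> permutes {..<2 + 2 * length ks}" and "\<exists>i<2. 2 \<le> \<sigma> i"
    then obtain i where i: "i < 2" "2 \<le> \<sigma> i" by blast
    have lt: "\<sigma> i < 2 + 2 * length ks" using permutes_in_image[OF s, of i] i by simp
    define t where "t = \<sigma> i div 2 - 1"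
    have t: "t < length ks" "(j # ks) ! (\<sigma> i div 2) = ks ! t" using i lt unfolding t_def
      by (auto simp: nth_Cons')
    have "ks ! t \<noteq> j" using Cons.prems t(1) by (metis distinct.simps(2) nth_mem)
    hence "?V (\<sigma> i) \<in> {v. v $ j = 0}" unfolding pairU_def t(2) axis_def by simp
    hence "dxdy j (\<lambda>i. ?V (\<sigma> i)) = 0"
      using dxdy_vanish[unfolded vanish_on_def, rule_format, of "\<lambda>i. ?V (\<sigma> i)"] i by blast
    then show "dxdy j (\<lambda>i. ?V (\<sigma> i)) * wedge_list2 (map dxdy ks) (\<lambda>i. ?V (\<sigma> (2 + i))) = 0" by simp
  qed
  moreover have "dxdy j ?V = 1" by (rule dxdy_eval) (simp_all add: pairU_def)
  moreover have "(\<lambda>i. ?V (2+i)) = pairU ks" by (rule ext) (simp add: pairU_def)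
  ultimately show ?case using Cons by simp
qed

definition enum_list :: "('m::finite) list" where
  "enum_list = (SOME l. distinct l \<and> set l = (UNIV :: 'm set))"

lemma enum_list: "distinct (enum_list :: 'm::finite list)" "set (enum_list :: 'm list) = UNIV"
proof -
  have "\<exists>l. distinct l \<and> set l = (UNIV :: 'm set)" using finite_distinct_list[of "UNIV :: 'm set"] by auto
  from someI_ex[OF this] show "distinct (enum_list :: 'm list)" "set (enum_list :: 'm list) = UNIV"
    unfolding enum_list_def by auto
qed

lemma std_vol_eq: "std_vol = wedge_list2 (map dxdy (enum_list :: 'm::finite list))"
  unfolding std_vol_def enum_list_def dxdy_def by simp

lemma length_enum: "length (enum_list :: 'm::finite list) = CARD('m)"
proof -
  have "card (set (enum_list::'m list)) = length (enum_list :: 'm list)" by (rule distinct_card[OF enum_list(1)])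
  thus ?thesis using enum_list(2) by metis
qed

lemma std_vol_pairU:
  assumes "distinct ks" "set ks = (UNIV :: 'm::finite set)"
  shows "std_vol (pairU ks) \<noteq> 0"
proof -
  define l0 where "l0 = (enum_list :: 'm list)"
  define m where "m = CARD('m)"
  have l0: "distinct l0" "set l0 = UNIV" "length l0 = m" unfolding l0_def m_def using enum_list length_enum by auto
  have lk: "length ks = m" unfolding m_def using distinct_card[OF assms(1)] assms(2) by simp
  have bij: "bij_betw ((!) l0) {..<m} UNIV" using bij_betw_nth[OF l0(1)] l0 by simp
  define idx where "idx = inv_into {..<m} ((!) l0)"
  have idx: "\<And>x. idx x < m" "\<And>x. l0 ! (idx x) = x"
    unfolding idx_def using bij_betw_inv_into[OF bij] bij
    by (auto simp: bij_betw_def f_inv_into_f inv_into_into)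
  define \<pi> where "\<pi> = (\<lambda>i. if i < 2*m then 2 * idx (ks ! (i div 2)) + i mod 2 else i)"
  have \<pi>lt: "\<And>i. i < 2*m \<Longrightarrow> \<pi> i < 2*m"
  proof -
    fix i assume "i < 2*m"
    have "idx (ks ! (i div 2)) < m" by (rule idx)
    then show "\<pi> i < 2*m" unfolding \<pi>_def using \<open>i < 2*m\<close> by simp
  qed
  have \<pi>inj: "inj_on \<pi> {..<2*m}"
  proof (rule inj_onI)
    fix a b assume a: "a \<in> {..<2*m}" and b: "b \<in> {..<2*m}" and e: "\<pi> a = \<pi> b"
    have e2: "2 * idx (ks ! (a div 2)) + a mod 2 = 2 * idx (ks ! (b div 2)) + b mod 2"
      using e a b unfolding \<pi>_def by simp
    hence "a mod 2 = b mod 2" by presburger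
    moreover from e2 this have "idx (ks ! (a div 2)) = idx (ks ! (b div 2))" by simp
    hence "ks ! (a div 2) = ks ! (b div 2)" by (metis idx(2))
    hence "a div 2 = b div 2" using a b lk assms(1) by (simp add: nth_eq_iff_index_eq)
    ultimately show "a = b" by (metis div_mult_mod_eq)
  qed
  have \<pi>perm: "\<pi> permutes {..<2*m}"
  proof (rule bij_imp_permutes)
    have "\<pi> ` {..<2*m} = {..<2*m}" by (rule endo_inj_surj) (use \<pi>lt \<pi>inj in auto)
    then show "bij_betw \<pi> {..<2*m} {..<2*m}" using \<pi>inj unfolding bij_betw_def by simp
  qed (simp add: \<pi>_def)
  have agree: "\<forall>i<2*m. pairU ks i = pairU l0 (\<pi> i)"
  proof (intro allI impI)
    fix i assume i: "i < 2*m"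
    have "\<pi> i div 2 = idx (ks ! (i div 2))" "even (\<pi> i) = even i" unfolding \<pi>_def using i by auto
    then show "pairU ks i = pairU l0 (\<pi> i)" unfolding pairU_def using idx(2) by simp
  qed
  have "std_vol (pairU ks) = wedge_list2 (map dxdy l0) (\<lambda>i. pairU l0 (\<pi> i))"
    unfolding std_vol_eq l0_def[symmetric]
    by (rule wedge_list2_local_dxdy[of l0, unfolded local_form_def, rule_format]) (use agree l0(3) in simp)
  also have "\<dots> = of_int (sign \<pi>) * wedge_list2 (map dxdy l0) (pairU l0)"
    using wedge_list2_alt[of "map dxdy l0", unfolded alt_form_def] \<pi>perm l0(3) by simp
  also have "\<dots> = of_int (sign \<pi>)" using wedge_list2_eval[OF l0(1)] by simp
  finally show ?thesis by simp
qed

lemma wedge_list_coord_eval: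
  "distinct ks \<Longrightarrow> wedge_list (map (\<lambda>k. oneform (\<lambda>x. x $ k)) ks) (\<lambda>i. axis (ks ! i) 1) = 1"
proof (induction ks)
  case Nil then show ?case by simp
next
  case (Cons k ks)
  let ?V = "\<lambda>i. axis ((k # ks) ! i) (1::complex)"
  have "wedge 1 (length ks) (oneform (\<lambda>x. x $ k)) (wedge_list (map (\<lambda>k. oneform (\<lambda>x. x $ k)) ks)) ?V
        = oneform (\<lambda>x. x $ k) ?V * wedge_list (map (\<lambda>k. oneform (\<lambda>x. x $ k)) ks) (\<lambda>i. ?V (1+i))"
  proof (rule wedge_block)
    show "local_form 1 (oneform (\<lambda>x. x $ k))" by (rule oneform_local)
    show "alt_form 1 (oneform (\<lambda>x. x $ k))" by (rule alt_form_1)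
    show "local_form (length ks) (wedge_list (map (\<lambda>k. oneform (\<lambda>x. x $ k)) ks))"
      using wedge_list_local[of "map (\<lambda>k. oneform (\<lambda>x. x $ k)) ks"] oneform_local[of "\<lambda>x. x $ k" for k] by auto
    show "alt_form (length ks) (wedge_list (map (\<lambda>k. oneform (\<lambda>x. x $ k)) ks))"
      using wedge_list_alt[of "map (\<lambda>k. oneform (\<lambda>x. x $ k)) ks"] by simp
    fix \<sigma> :: "nat \<Rightarrow> nat" assume s: "\<sigma> permutes {..<1 + length ks}" and "\<exists>i<1. 1 \<le> \<sigma> i"
    hence g: "1 \<le> \<sigma> 0" by auto
    have lt: "\<sigma> 0 < 1 + length ks" using permutes_in_image[OF s, of 0] by simp
    have "(k # ks) ! (\<sigma> 0) = ks ! (\<sigma> 0 - 1)" using g by (simp add: nth_Cons')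
    moreover have "ks ! (\<sigma> 0 - 1) \<noteq> k" using Cons.prems g lt by (metis distinct.simps(2) nth_mem less_diff_conv2 add.commute)
    ultimately have "oneform (\<lambda>x. x $ k) (\<lambda>i. ?V (\<sigma> i)) = 0" unfolding oneform_def axis_def by simp
    then show "oneform (\<lambda>x. x $ k) (\<lambda>i. ?V (\<sigma> i)) * wedge_list (map (\<lambda>k. oneform (\<lambda>x. x $ k)) ks) (\<lambda>i. ?V (\<sigma> (1 + i))) = 0" by simp
  qed
  moreover have "oneform (\<lambda>x. x $ k) ?V = 1" unfolding oneform_def by simp
  moreover have "(\<lambda>i. ?V (1+i)) = (\<lambda>i. axis (ks ! i) 1)" by simp
  ultimately show ?case using Cons by simp
qed

lemma pigeon_perm:
  fixes k l :: nat
  assumes s: "\<sigma> permutes {..<k+l}" and ge: "\<forall>i<l. k \<le> \<sigma> (k+i)"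
  shows "\<forall>i<k. \<sigma> i < k"
proof (intro allI impI)
  fix i assume i: "i < k"
  have injs: "inj \<sigma>" using permutes_inj[OF s] .
  have sub: "\<sigma> ` {k..<k+l} \<subseteq> {k..<k+l}"
  proof
    fix y assume "y \<in> \<sigma> ` {k..<k+l}"
    then obtain j where j: "j \<in> {k..<k+l}" "y = \<sigma> j" by auto
    have "j = k + (j - k)" "j - k < l" using j by auto
    hence "k \<le> \<sigma> j" using ge by metis
    moreover have "\<sigma> j < k + l" using permutes_in_image[OF s, of j] j by simp
    ultimately show "y \<in> {k..<k+l}" using j by simp
  qed
  have eq: "\<sigma> ` {k..<k+l} = {k..<k+l}"
    by (rule endo_inj_surj) (use sub injs in \<open>auto simp: inj_on_def\<close>)
  show "\<sigma> i < k"
  proof (rule ccontr)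
    assume "\<not> \<sigma> i < k"
    moreover have "\<sigma> i < k + l" using permutes_in_image[OF s, of i] i by simp
    ultimately have "\<sigma> i \<in> \<sigma> ` {k..<k+l}" using eq by simp
    then obtain j where j: "j \<in> {k..<k+l}" "\<sigma> i = \<sigma> j" by auto
    then have "i = j" using injs by (simp add: inj_eq)
    then show False using j(1) i by simp
  qed
qed

lemma wedge_pair_eval:
  assumes "local_form k \<Omega>" "alt_form k \<Omega>" "local_form l \<eta>" "alt_form l \<eta>" "vanish_on l Z \<eta>"
    and VZ: "\<forall>i<k. V i \<in> Z"
  shows "wedge k l \<Omega> \<eta> V = \<Omega> V * \<eta> (\<lambda>i. V (k+i))"
proof (rule wedge_block[OF assms(1-4)])
  fix \<sigma> assume s: "\<sigma> permutes {..<k+l}" and ex: "\<exists>i<k. k \<le> \<sigma> i"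
  have "\<not> (\<forall>i<l. k \<le> \<sigma> (k+i))" using pigeon_perm[OF s] ex by force
  then obtain i where i: "i < l" "\<sigma> (k+i) < k" by force
  have "\<eta> (\<lambda>i. V (\<sigma> (k+i))) = 0"
    using assms(5)[unfolded vanish_on_def, rule_format, of "\<lambda>i. V (\<sigma> (k+i))"] i VZ by blast
  then show "\<Omega> (\<lambda>i. V (\<sigma> i)) * \<eta> (\<lambda>i. V (\<sigma> (k+i))) = 0" by simp
qed


definition spt :: "real \<Rightarrow> complex^('n::finite option)" where
  "spt s = (\<chi> k. case k of None \<Rightarrow> complex_of_real s | Some i \<Rightarrow> 0)"

definition lvec :: "real^'n^'n \<Rightarrow> real^'n \<Rightarrow> real^'n \<Rightarrow> complex^('n::finite option)" where
  "lvec P a b = (\<chi> k. case k of None \<Rightarrow> 0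
      | Some i \<Rightarrow> complex_of_real ((P *v a) $ i) + \<i> * complex_of_real ((P *v b) $ i))"

definition ivec :: "nat \<Rightarrow> ('n::finite \<Rightarrow> int) \<Rightarrow> real^'n" where
  "ivec N \<xi> = (\<chi> j. real_of_int (\<xi> j) / real N)"

definition gpt :: "real^'n^'n \<Rightarrow> nat \<Rightarrow> real \<Rightarrow> ('n \<Rightarrow> int) \<times> ('n \<Rightarrow> int) \<Rightarrow> complex^('n::finite option)" where
  "gpt P N s \<iota> = spt s + lvec P (ivec N (fst \<iota>)) (ivec N (snd \<iota>))"

definition grid :: "nat \<Rightarrow> (('n::finite \<Rightarrow> int) \<times> ('n \<Rightarrow> int)) set" where
  "grid N = (UNIV \<rightarrow>\<^sub>E {0..<int N}) \<times> (UNIV \<rightarrow>\<^sub>E {0..<int N})"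

definition periodic :: "real^'n^'n \<Rightarrow> (complex^('n::finite option) \<Rightarrow> 'b) \<Rightarrow> bool" where
  "periodic P F \<longleftrightarrow> (\<forall>x a b. F (x + lvec P (ivec 1 a) (ivec 1 b)) = F x)"

definition red :: "nat \<Rightarrow> ('n \<Rightarrow> int) \<times> ('n \<Rightarrow> int) \<Rightarrow> ('n \<Rightarrow> int) \<times> ('n \<Rightarrow> int)" where
  "red N \<iota> = ((\<lambda>j. fst \<iota> j mod int N), (\<lambda>j. snd \<iota> j mod int N))"

lemma lvec_add: "lvec P (a + a') (b + b') = lvec P a b + lvec P a' b'"
  unfolding lvec_def vec_eq_iff by (auto simp: matrix_vector_right_distrib algebra_simps split: option.splits)

lemma lvec_scale: "lvec P (c *\<^sub>R a) (c *\<^sub>R b) = c *\<^sub>R lvec P a b"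
proof -
  have cs: "\<And>z::complex. c *\<^sub>R z = complex_of_real c * z" by (simp add: scaleR_conv_of_real)
  show ?thesis
    unfolding lvec_def vec_eq_iff
    by (auto simp: matrix_vector_mult_scaleR vector_scaleR_component cs algebra_simps split: option.splits)
qed

lemma lvec_add1: "lvec P (a + a') b = lvec P a b + lvec P a' 0"
  using lvec_add[of P a a' b 0] by simp

lemma lvec_add2: "lvec P a (b + b') = lvec P a b + lvec P 0 b'"
  using lvec_add[of P a 0 b b'] by simp

lemma finite_grid: "finite (grid N)"
  unfolding grid_def by (intro finite_cartesian_product finite_PiE) auto

lemma grid_nonempty: "(\<lambda>_. 0, \<lambda>_. 0) \<in> grid N" if "N > 0"
  using that unfolding grid_def by auto

lemma red_in_grid: "N > 0 \<Longrightarrow> red N \<iota> \<in> grid N"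
  unfolding red_def grid_def by auto

lemma red_grid: "\<iota> \<in> grid N \<Longrightarrow> red N \<iota> = \<iota>"
  unfolding red_def grid_def by (cases \<iota>) (auto simp: fun_eq_iff PiE_iff)

lemma ivec_split: "N > 0 \<Longrightarrow> ivec N \<xi> = ivec N (\<lambda>j. \<xi> j mod int N) + ivec 1 (\<lambda>j. \<xi> j div int N)"
proof -
  assume N: "N > 0"
  have "\<And>j. real_of_int (\<xi> j) / real N = real_of_int (\<xi> j mod int N) / real N + real_of_int (\<xi> j div int N)"
  proof -
    fix j
    have "\<xi> j = \<xi> j div int N * int N + \<xi> j mod int N" by simp
    hence "real_of_int (\<xi> j) = real_of_int (\<xi> j div int N) * real N + real_of_int (\<xi> j mod int N)"
      by (metis of_int_add of_int_mult of_int_of_nat_eq)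
    then show "?thesis j" using N by (simp add: field_simps)
  qed
  then show ?thesis unfolding ivec_def by (vector)
qed

lemma periodic_red:
  assumes "periodic P F" "N > 0"
  shows "F (gpt P N s \<iota>) = F (gpt P N s (red N \<iota>))"
proof -
  obtain \<xi> \<eta> where \<iota>: "\<iota> = (\<xi>, \<eta>)" by (cases \<iota>)
  have "gpt P N s \<iota> = gpt P N s (red N \<iota>) + lvec P (ivec 1 (\<lambda>j. \<xi> j div int N)) (ivec 1 (\<lambda>j. \<eta> j div int N))"
    unfolding gpt_def red_def \<iota> using ivec_split[OF assms(2), of \<xi>] ivec_split[OF assms(2), of \<eta>]
    by (simp add: lvec_add add.assoc)
  then show ?thesis using assms(1) unfolding periodic_def by metis
qed

lemma sum_grid_bij:
  fixes \<phi> :: "('n::finite \<Rightarrow> int) \<times> ('n \<Rightarrow> int) \<Rightarrow> ('n \<Rightarrow> int) \<times> ('n \<Rightarrow> int)"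
  assumes "\<And>\<iota>. \<iota> \<in> grid N \<Longrightarrow> \<phi> \<iota> \<in> grid N" "inj_on \<phi> (grid N)"
  shows "(\<Sum>\<iota>\<in>grid N. G (\<phi> \<iota>)) = (\<Sum>\<iota>\<in>grid N. G \<iota>)"
proof -
  have "\<phi> ` grid N \<subseteq> grid N" using assms(1) by auto
  then have "\<phi> ` grid N = grid N" using endo_inj_surj[OF finite_grid, of \<phi> N] assms(2) by blast
  then show ?thesis using sum.reindex[OF assms(2), of G] by simp
qed

definition shiftg :: "bool \<Rightarrow> 'n \<Rightarrow> ('n \<Rightarrow> int) \<times> ('n \<Rightarrow> int) \<Rightarrow> ('n \<Rightarrow> int) \<times> ('n \<Rightarrow> int)" where
  "shiftg t j \<iota> = (if t then (fst \<iota>, \<lambda>i. snd \<iota> i + (if i = j then 1 else 0))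
                         else (\<lambda>i. fst \<iota> i + (if i = j then 1 else 0), snd \<iota>))"

definition bvec :: "real^'n^'n \<Rightarrow> bool \<Rightarrow> 'n \<Rightarrow> complex^('n::finite option)" where
  "bvec P t j = lvec P (if t then 0 else axis j 1) (if t then axis j 1 else 0)"

lemma gpt_shift:
  assumes "N > 0"
  shows "gpt P N s (shiftg t j \<iota>) = gpt P N s \<iota> + (1 / real N) *\<^sub>R bvec P t j"
proof -
  have iv: "ivec N (\<lambda>i. \<xi> i + (if i = j then 1 else 0)) = ivec N \<xi> + (1 / real N) *\<^sub>R axis j 1" for \<xi> :: "'a \<Rightarrow> int"
    unfolding ivec_def by (vector axis_def) (auto simp: add_divide_distrib)
  have z: "(1 / real N) *\<^sub>R (0::real^'a) = 0" by simp
  show ?thesis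
    unfolding gpt_def shiftg_def bvec_def
    by (cases t) (simp_all add: iv lvec_add1 lvec_add2 lvec_scale[symmetric] add.assoc)
qed

lemma mod_cancel_grid:
  fixes a b c :: int
  assumes "0 \<le> a" "a < N" "0 \<le> b" "b < N" "(a + c) mod N = (b + c) mod N"
  shows "a = b"
proof -
  have "N dvd (a + c) - (b + c)" using assms(5) by (simp add: mod_eq_dvd_iff)
  hence "N dvd a - b" by simp
  moreover have "\<bar>a - b\<bar> < N" using assms by auto
  ultimately have "a - b = 0"
  proof -
    assume d: "N dvd a - b" and lt: "\<bar>a - b\<bar> < N"
    show "a - b = 0"
    proof (rule ccontr)
      assume "a - b \<noteq> 0"
      then have "\<bar>N\<bar> \<le> \<bar>a - b\<bar>" using d by (rule dvd_imp_le_int)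
      then show False using lt by simp
    qed
  qed
  then show ?thesis by simp
qed

lemma shift_bij:
  assumes "N > 0"
  shows "\<And>\<iota>. \<iota> \<in> grid N \<Longrightarrow> red N (shiftg t j \<iota>) \<in> grid N" "inj_on (\<lambda>\<iota>. red N (shiftg t j \<iota>)) (grid N)"
proof -
  show "\<And>\<iota>. \<iota> \<in> grid N \<Longrightarrow> red N (shiftg t j \<iota>) \<in> grid N" using red_in_grid[OF assms] by blast
  show "inj_on (\<lambda>\<iota>. red N (shiftg t j \<iota>)) (grid N)"
  proof (rule inj_onI)
    fix x y assume x: "x \<in> grid N" and y: "y \<in> grid N" and e: "red N (shiftg t j x) = red N (shiftg t j y)"
    have rng: "\<And>i. 0 \<le> fst x i \<and> fst x i < int N" "\<And>i. 0 \<le> snd x i \<and> snd x i < int N"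
              "\<And>i. 0 \<le> fst y i \<and> fst y i < int N" "\<And>i. 0 \<le> snd y i \<and> snd y i < int N"
      using x y unfolding grid_def by (auto simp: PiE_iff)
    have "fst x = fst y"
    proof
      fix i
      have "fst (red N (shiftg t j x)) i = fst (red N (shiftg t j y)) i" using e by simp
      then have "(fst x i + (if \<not> t \<and> i = j then 1 else 0)) mod int N = (fst y i + (if \<not> t \<and> i = j then 1 else 0)) mod int N"
        by (cases t) (simp_all add: red_def shiftg_def)
      then show "fst x i = fst y i" by (rule mod_cancel_grid[rotated 4]) (use rng in auto)
    qed
    moreover have "snd x = snd y"
    proof
      fix i
      have "snd (red N (shiftg t j x)) i = snd (red N (shiftg t j y)) i" using e by simp
      then have "(snd x i + (if t \<and> i = j then 1 else 0)) mod int N = (snd y i + (if t \<and> i = j then 1 else 0)) mod int N"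
        by (cases t) (simp_all add: red_def shiftg_def)
      then show "snd x i = snd y i" by (rule mod_cancel_grid[rotated 4]) (use rng in auto)
    qed
    ultimately show "x = y" by (simp add: prod_eq_iff)
  qed
qed

lemma sum_shift:
  assumes "periodic P G" "N > 0"
  shows "(\<Sum>\<iota>\<in>grid N. G (gpt P N s \<iota> + (1 / real N) *\<^sub>R bvec P t j)) = (\<Sum>\<iota>\<in>grid N. G (gpt P N s \<iota>))"
proof -
  have "\<And>\<iota>. G (gpt P N s \<iota> + (1 / real N) *\<^sub>R bvec P t j) = G (gpt P N s (red N (shiftg t j \<iota>)))"
  proof -
    fix \<iota>
    have "gpt P N s \<iota> + (1 / real N) *\<^sub>R bvec P t j = gpt P N s (shiftg t j \<iota>)"
      by (rule gpt_shift[OF assms(2), symmetric])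
    then show "G (gpt P N s \<iota> + (1 / real N) *\<^sub>R bvec P t j) = G (gpt P N s (red N (shiftg t j \<iota>)))"
      using periodic_red[OF assms, of s "shiftg t j \<iota>"] by simp
  qed
  then have "(\<Sum>\<iota>\<in>grid N. G (gpt P N s \<iota> + (1 / real N) *\<^sub>R bvec P t j))
      = (\<Sum>\<iota>\<in>grid N. G (gpt P N s (red N (shiftg t j \<iota>))))" by simp
  also have "\<dots> = (\<Sum>\<iota>\<in>grid N. G (gpt P N s \<iota>))"
    by (rule sum_grid_bij[OF shift_bij[OF assms(2)]])
  finally show ?thesis .
qed


definition Mr :: "int^'n^'n \<Rightarrow> real^'n^'n" where
  "Mr M = (\<chi> i j. real_of_int (M$i$j))"

definition imul :: "int^'n^'n \<Rightarrow> ('n::finite \<Rightarrow> int) \<Rightarrow> ('n \<Rightarrow> int)" where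
  "imul M \<xi> = (\<lambda>i. \<Sum>j\<in>UNIV. M$i$j * \<xi> j)"

definition twistg :: "int^'n^'n \<Rightarrow> ('n::finite \<Rightarrow> int) \<times> ('n \<Rightarrow> int) \<Rightarrow> ('n \<Rightarrow> int) \<times> ('n \<Rightarrow> int)" where
  "twistg M \<iota> = (imul M (fst \<iota>), imul M (snd \<iota>))"

definition twist :: "('n \<Rightarrow> real) \<Rightarrow> complex^('n::finite option) \<Rightarrow> complex^('n option)" where
  "twist lam x = (\<chi> k. case k of None \<Rightarrow> 1 + x $ None
      | Some i \<Rightarrow> complex_of_real (exp (lam i)) * x $ Some i)"

lemma det_of_int: "det (\<chi> i j. (of_int (A$i$j) :: 'a::comm_ring_1)) = of_int (det A)"
  unfolding det_def by (simp add: of_int_sum of_int_prod)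

lemma dvd_small_eq:
  fixes a b N :: int
  assumes "N dvd a - b" "\<bar>a - b\<bar> < N"
  shows "a = b"
proof (rule ccontr)
  assume "a \<noteq> b"
  then have "a - b \<noteq> 0" by simp
  then have "\<bar>N\<bar> \<le> \<bar>a - b\<bar>" using assms(1) by (rule dvd_imp_le_int)
  then show False using assms(2) by simp
qed

lemma int_cramer_dvd:
  fixes M :: "int^'n::finite^'n" and d :: "'n \<Rightarrow> int"
  assumes "det M = 1" "\<And>i. N dvd imul M d i"
  shows "N dvd d k"
proof -
  define w where "w i = imul M d i div N" for i
  have w: "\<And>i. imul M d i = N * w i" unfolding w_def using assms(2) by simp
  define x where "x = (\<chi> j. real_of_int (d j))"
  define B where "B = (\<chi> i j. if j = k then N * w i else M$i$j)"
  have Mx: "(Mr M *v x) $ i = real_of_int (N * w i)" for i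
    unfolding w[symmetric] Mr_def x_def imul_def matrix_vector_mult_def by simp
  have c: "det ((\<chi> i j. if j = k then (Mr M *v x)$i else Mr M$i$j) :: real^'n^'n) = x$k * det (Mr M)"
    by (rule cramer_lemma)
  have m1: "det (Mr M) = 1" unfolding Mr_def det_of_int assms(1) by simp
  have m2: "(\<chi> i j. if j = k then (Mr M *v x)$i else Mr M$i$j) = (\<chi> i j. real_of_int (B$i$j))"
    unfolding B_def Mx by (vector Mr_def)
  from c have "det ((\<chi> i j. real_of_int (B$i$j)) :: real^'n^'n) = x$k" by (simp only: m1 m2 mult_1_right)
  then have "real_of_int (det B) = real_of_int (d k)" unfolding det_of_int x_def by simp
  hence dk: "d k = det B" by simp
  have "N dvd det B"
    unfolding det_def
  proof (rule dvd_sum)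
    fix p assume "p \<in> {p. p permutes (UNIV :: 'n set)}"
    hence p: "p permutes UNIV" by simp
    define i0 where "i0 = inv p k"
    have pi0: "p i0 = k" unfolding i0_def using permutes_inverses(1)[OF p] by simp
    have "N dvd B $ i0 $ p i0" unfolding pi0 B_def by simp
    also have "B $ i0 $ p i0 dvd (\<Prod>i\<in>UNIV. B $ i $ p i)" by (rule dvd_prodI) auto
    finally show "N dvd of_int (sign p) * (\<Prod>i\<in>UNIV. B $ i $ p i)" by simp
  qed
  then show ?thesis using dk by simp
qed

lemma twist_bij:
  fixes M :: "int^'n::finite^'n"
  assumes "det M = 1" "N > 0"
  shows "\<And>\<iota>. \<iota> \<in> grid N \<Longrightarrow> red N (twistg M \<iota>) \<in> grid N" "inj_on (\<lambda>\<iota>. red N (twistg M \<iota>)) (grid N)"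
proof -
  show "\<And>\<iota>. \<iota> \<in> grid N \<Longrightarrow> red N (twistg M \<iota>) \<in> grid N" using red_in_grid[OF assms(2)] by blast
  show "inj_on (\<lambda>\<iota>. red N (twistg M \<iota>)) (grid N)"
  proof (rule inj_onI)
    fix x y assume x: "x \<in> grid N" and y: "y \<in> grid N" and e: "red N (twistg M x) = red N (twistg M y)"
    have rng: "\<And>i. 0 \<le> fst x i \<and> fst x i < int N" "\<And>i. 0 \<le> snd x i \<and> snd x i < int N"
              "\<And>i. 0 \<le> fst y i \<and> fst y i < int N" "\<And>i. 0 \<le> snd y i \<and> snd y i < int N"
      using x y unfolding grid_def by (auto simp: PiE_iff)
    have lin: "imul M a i - imul M b i = imul M (\<lambda>j. a j - b j) i" for a b i
      unfolding imul_def by (simp add: sum_subtractf algebra_simps)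
    have key: "\<And>a b. (\<And>i. imul M a i mod int N = imul M b i mod int N) \<Longrightarrow>
                  (\<And>i. 0 \<le> a i \<and> a i < int N) \<Longrightarrow> (\<And>i. 0 \<le> b i \<and> b i < int N) \<Longrightarrow> a = b"
    proof
      fix a b i
      assume m: "\<And>i. imul M a i mod int N = imul M b i mod int N"
        and ra: "\<And>i. 0 \<le> a i \<and> a i < int N" and rb: "\<And>i. 0 \<le> b i \<and> b i < int N"
      have "\<And>i. int N dvd imul M (\<lambda>j. a j - b j) i"
        using m unfolding lin[symmetric] by (simp add: mod_eq_dvd_iff)
      then have "int N dvd a i - b i" using int_cramer_dvd[OF assms(1)] by blast
      moreover have "\<bar>a i - b i\<bar> < int N" using ra[of i] rb[of i] by auto
      ultimately show "a i = b i" by (rule dvd_small_eq)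
    qed
    have "fst x = fst y"
    proof (rule key)
      fix i
      have "fst (red N (twistg M x)) i = fst (red N (twistg M y)) i" using e by simp
      then show "imul M (fst x) i mod int N = imul M (fst y) i mod int N" by (simp add: red_def twistg_def)
    qed (use rng in auto)
    moreover have "snd x = snd y"
    proof (rule key)
      fix i
      have "snd (red N (twistg M x)) i = snd (red N (twistg M y)) i" using e by simp
      then show "imul M (snd x) i mod int N = imul M (snd y) i mod int N" by (simp add: red_def twistg_def)
    qed (use rng in auto)
    ultimately show "x = y" by (simp add: prod_eq_iff)
  qed
qed

lemma Mr_ivec: "Mr M *v ivec N \<xi> = ivec N (imul M \<xi>)"
  unfolding Mr_def ivec_def imul_def matrix_vector_mult_def
  by (vector of_int_sum sum_divide_distrib)

lemma twist_gpt:
  assumes PM: "\<And>i a. exp (lam i) * (P *v a) $ i = (P *v (Mr M *v a)) $ i"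
  shows "twist lam (gpt P N 0 \<iota>) = gpt P N 1 (twistg M \<iota>)"
proof -
  have "\<And>i a. complex_of_real (exp (lam i)) * complex_of_real ((P *v a) $ i) = complex_of_real ((P *v (Mr M *v a)) $ i)"
    using PM by (metis of_real_mult)
  then show ?thesis
    unfolding twist_def gpt_def spt_def lvec_def twistg_def vec_eq_iff
    by (auto simp: Mr_ivec[symmetric] algebra_simps split: option.splits)
qed

lemma sum_twist:
  assumes "periodic P G" "N > 0" "det M = 1"
    and PM: "\<And>i a. exp (lam i) * (P *v a) $ i = (P *v (Mr M *v a)) $ i"
  shows "(\<Sum>\<iota>\<in>grid N. G (gpt P N 1 \<iota>)) = (\<Sum>\<iota>\<in>grid N. G (twist lam (gpt P N 0 \<iota>)))"
proof -
  have "(\<Sum>\<iota>\<in>grid N. G (gpt P N 1 \<iota>)) = (\<Sum>\<iota>\<in>grid N. G (gpt P N 1 (red N (twistg M \<iota>))))"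
    by (rule sum_grid_bij[OF twist_bij[OF assms(3,2)], symmetric])
  also have "\<dots> = (\<Sum>\<iota>\<in>grid N. G (gpt P N 1 (twistg M \<iota>)))"
    using periodic_red[OF assms(1,2)] by simp
  also have "\<dots> = (\<Sum>\<iota>\<in>grid N. G (twist lam (gpt P N 0 \<iota>)))"
    using twist_gpt[OF PM] by simp
  finally show ?thesis .
qed


definition PhiC :: "real^'n^'n \<Rightarrow> real \<times> ((real^'n) \<times> (real^'n)) \<Rightarrow> complex^('n::finite option)" where
  "PhiC P z = spt (fst z) + lvec P (fst (snd z)) (snd (snd z))"

definition CC :: "real^'n^'n \<Rightarrow> (complex^('n::finite option)) set" where
  "CC P = PhiC P ` ({0..1} \<times> (cbox 0 (\<chi> i. 2) \<times> cbox 0 (\<chi> i. 2)))"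

lemma spt_add: "spt (s + s') = spt s + spt s'"
  unfolding spt_def vec_eq_iff by (auto split: option.splits)

lemma spt_scale: "spt (c * s) = c *\<^sub>R spt s"
proof -
  have cs: "\<And>z::complex. c *\<^sub>R z = complex_of_real c * z" by (simp add: scaleR_conv_of_real)
  show ?thesis unfolding spt_def vec_eq_iff by (auto split: option.splits simp: vector_scaleR_component cs)
qed

lemma PhiC_linear: "linear (PhiC P)"
proof (rule linearI)
  fix x y :: "real \<times> ((real^'a) \<times> (real^'a))"
  show "PhiC P (x + y) = PhiC P x + PhiC P y"
    unfolding PhiC_def by (simp add: spt_add lvec_add algebra_simps)
next
  fix c :: real and x :: "real \<times> ((real^'a) \<times> (real^'a))"
  show "PhiC P (c *\<^sub>R x) = c *\<^sub>R PhiC P x"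
    unfolding PhiC_def by (simp add: spt_scale lvec_scale scaleR_add_right)
qed

lemma compact_CC: "compact (CC P)"
  unfolding CC_def
  by (rule compact_continuous_image[OF linear_continuous_on_compose[OF continuous_on_id PhiC_linear, simplified]])
     (intro compact_Times compact_cbox compact_Icc)

lemma ivec_range:
  assumes "\<iota> \<in> grid N" "N > 0"
  shows "0 \<le> ivec N (fst \<iota>) $ i \<and> ivec N (fst \<iota>) $ i \<le> 1"
    "0 \<le> ivec N (snd \<iota>) $ i \<and> ivec N (snd \<iota>) $ i \<le> 1"
proof -
  have h: "0 \<le> fst \<iota> i" "fst \<iota> i < int N" "0 \<le> snd \<iota> i" "snd \<iota> i < int N"
    using assms(1) unfolding grid_def by (auto simp: PiE_iff mem_Times_iff)
  have "real_of_int (fst \<iota> i) \<le> real_of_int (int N)" "real_of_int (snd \<iota> i) \<le> real_of_int (int N)"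
    using h by simp_all
  then show "0 \<le> ivec N (fst \<iota>) $ i \<and> ivec N (fst \<iota>) $ i \<le> 1"
    "0 \<le> ivec N (snd \<iota>) $ i \<and> ivec N (snd \<iota>) $ i \<le> 1"
    using h assms(2) by (auto simp: ivec_def divide_le_eq_1)
qed

lemma gpt_line_in_CC:
  assumes "\<iota> \<in> grid N" "N > 0" "s \<in> {0..1}" "0 \<le> \<tau>" "\<tau> \<le> 1"
  shows "gpt P N s \<iota> + \<tau> *\<^sub>R bvec P t j \<in> CC P"
proof -
  define a where "a = ivec N (fst \<iota>) + \<tau> *\<^sub>R (if t then 0 else axis j 1)"
  define b where "b = ivec N (snd \<iota>) + \<tau> *\<^sub>R (if t then axis j 1 else 0)"
  have eqP: "gpt P N s \<iota> + \<tau> *\<^sub>R bvec P t j = PhiC P (s, a, b)"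
    unfolding gpt_def PhiC_def bvec_def a_def b_def by (simp add: lvec_add lvec_scale[symmetric] add.assoc)
  have ab: "0 \<le> a $ i \<and> a $ i \<le> 2 \<and> 0 \<le> b $ i \<and> b $ i \<le> 2" for i
  proof -
    have r: "0 \<le> ivec N (fst \<iota>) $ i" "ivec N (fst \<iota>) $ i \<le> 1" "0 \<le> ivec N (snd \<iota>) $ i" "ivec N (snd \<iota>) $ i \<le> 1"
      using ivec_range[OF assms(1,2), of i] by auto
    show ?thesis using r assms(4,5) by (cases t; cases "i = j") (simp_all add: a_def b_def axis_def)
  qed
  then have "a \<in> cbox 0 (\<chi> i. 2)" "b \<in> cbox 0 (\<chi> i. 2)" unfolding mem_box_cart by auto
  then show ?thesis using assms(3) unfolding eqP CC_def by (intro imageI) auto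
qed

lemma gpt_in_CC: "\<iota> \<in> grid N \<Longrightarrow> N > 0 \<Longrightarrow> s \<in> {0..1} \<Longrightarrow> gpt P N s \<iota> \<in> CC P"
  using gpt_line_in_CC[of \<iota> N s 0 P True undefined] by simp

lemma line_deriv:
  assumes "G differentiable (at (x + \<tau> *\<^sub>R b))"
  shows "((\<lambda>\<tau>. G (x + \<tau> *\<^sub>R b)) has_vector_derivative frechet_derivative G (at (x + \<tau> *\<^sub>R b)) b) (at \<tau> within S)"
proof -
  let ?D = "frechet_derivative G (at (x + \<tau> *\<^sub>R b))"
  have dG: "(G has_derivative ?D) (at (x + \<tau> *\<^sub>R b))" using assms frechet_derivative_works by blast
  have dl: "((\<lambda>\<tau>. x + \<tau> *\<^sub>R b) has_derivative (\<lambda>h. h *\<^sub>R b)) (at \<tau>)"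
    by (auto intro!: derivative_eq_intros)
  have "((G \<circ> (\<lambda>\<tau>. x + \<tau> *\<^sub>R b)) has_derivative (?D \<circ> (\<lambda>h. h *\<^sub>R b))) (at \<tau>)"
    by (rule diff_chain_at[OF dl]) (use dG in simp)
  moreover have "?D \<circ> (\<lambda>h. h *\<^sub>R b) = (\<lambda>h. h *\<^sub>R ?D b)"
    using linear_cmul[OF has_derivative_linear[OF dG]] by (auto simp: fun_eq_iff)
  ultimately have "((\<lambda>\<tau>. G (x + \<tau> *\<^sub>R b)) has_vector_derivative ?D b) (at \<tau>)"
    unfolding has_vector_derivative_def by (simp add: o_def)
  then show ?thesis by (rule has_vector_derivative_at_within)
qed

lemma uniform_diff_est:
  fixes G :: "complex^('n::finite option) \<Rightarrow> complex"
  assumes diff: "\<And>x. G differentiable (at x)"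
    and cont: "continuous_on UNIV (\<lambda>x. frechet_derivative G (at x) (bvec P t j))"
    and per: "periodic P G" and e: "\<epsilon> > 0"
  shows "eventually (\<lambda>N. \<forall>s\<in>{0..1}. norm (\<Sum>\<iota>\<in>grid N. frechet_derivative G (at (gpt P N s \<iota>)) (bvec P t j))
            \<le> \<epsilon> * real (card (grid N :: (('n \<Rightarrow> int) \<times> ('n \<Rightarrow> int)) set))) sequentially"
proof -
  define b where "b = bvec P t j"
  define g where "g x = frechet_derivative G (at x) b" for x
  have "uniformly_continuous_on (CC P) g"
    unfolding g_def b_def by (rule compact_uniformly_continuous[OF continuous_on_subset[OF cont] compact_CC]) simp
  then obtain \<delta> where \<delta>: "\<delta> > 0" "\<And>x y. x \<in> CC P \<Longrightarrow> y \<in> CC P \<Longrightarrow> dist y x < \<delta> \<Longrightarrow> dist (g y) (g x) < \<epsilon>"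
    unfolding uniformly_continuous_on_def using e by metis
  obtain N0 :: nat where N0: "norm b / \<delta> < real N0" using reals_Archimedean2 by blast
  show ?thesis unfolding eventually_sequentially
  proof (intro exI[of _ "N0 + 1"] allI impI ballI)
    fix N :: nat and s :: real assume NN: "N0 + 1 \<le> N" and s: "s \<in> {0..1}"
    have N: "N > 0" using NN by simp
    have Nd: "norm b / real N < \<delta>"
    proof -
      have "norm b / \<delta> < real N" using N0 NN by linarith
      then show ?thesis using \<delta>(1) N by (simp add: divide_less_eq mult.commute)
    qed
    have est: "norm (G (gpt P N s \<iota> + (1 / real N) *\<^sub>R b) - G (gpt P N s \<iota>) - (1 / real N) *\<^sub>R g (gpt P N s \<iota>))
               \<le> (1 / real N) * \<epsilon>" if \<iota>: "\<iota> \<in> grid N" for \<iota>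
    proof -
      let ?x = "gpt P N s \<iota>"
      let ?S = "{0..1 / real N}"
      have inC: "\<And>\<tau>. \<tau> \<in> ?S \<Longrightarrow> ?x + \<tau> *\<^sub>R b \<in> CC P"
      proof -
        fix \<tau> assume "\<tau> \<in> ?S"
        then have "0 \<le> \<tau>" "\<tau> \<le> 1 / real N" by auto
        moreover have "1 / real N \<le> 1" using N by simp
        ultimately show "?x + \<tau> *\<^sub>R b \<in> CC P" unfolding b_def using gpt_line_in_CC[OF \<iota> N s, of \<tau> P t j] by simp
      qed
      have "norm ((\<lambda>\<tau>. G (?x + \<tau> *\<^sub>R b)) (1 / real N) - (\<lambda>\<tau>. G (?x + \<tau> *\<^sub>R b)) 0 - (1 / real N - 0) *\<^sub>R g (?x + 0 *\<^sub>R b))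
            \<le> norm (1 / real N - 0) * \<epsilon>"
      proof (rule vector_differentiable_bound_linearization)
        fix \<tau> assume "\<tau> \<in> ?S"
        show "((\<lambda>\<tau>. G (?x + \<tau> *\<^sub>R b)) has_vector_derivative g (?x + \<tau> *\<^sub>R b)) (at \<tau> within ?S)"
          unfolding g_def by (rule line_deriv[OF diff])
      next
        show "closed_segment 0 (1 / real N) \<subseteq> ?S" by (simp add: closed_segment_eq_real_ivl)
      next
        fix \<tau> assume \<tau>: "\<tau> \<in> ?S"
        have "dist (?x + \<tau> *\<^sub>R b) ?x = \<tau> * norm b" using \<tau> by (simp add: dist_norm)
        also have "\<dots> \<le> (1 / real N) * norm b" using \<tau> mult_right_mono[of \<tau> "1 / real N" "norm b"] by simp
        also have "\<dots> = norm b / real N" by simp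
        finally have "dist (?x + \<tau> *\<^sub>R b) ?x < \<delta>" using Nd by linarith
        then have "dist (g (?x + \<tau> *\<^sub>R b)) (g (?x + 0 *\<^sub>R b)) < \<epsilon>"
          using \<delta>(2)[OF _ inC[OF \<tau>]] inC[of 0] by simp
        then show "norm (g (?x + \<tau> *\<^sub>R b) - g (?x + 0 *\<^sub>R b)) \<le> \<epsilon>" by (simp add: dist_norm)
      next
        show "0 \<in> ?S" by simp
      qed
      then show ?thesis by simp
    qed
    have zero: "(\<Sum>\<iota>\<in>grid N. G (gpt P N s \<iota> + (1 / real N) *\<^sub>R b) - G (gpt P N s \<iota>)) = 0"
      unfolding sum_subtractf b_def using sum_shift[OF per N] by simp
    have "(1 / real N) *\<^sub>R (\<Sum>\<iota>\<in>grid N. g (gpt P N s \<iota>))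
        = - (\<Sum>\<iota>\<in>grid N. G (gpt P N s \<iota> + (1 / real N) *\<^sub>R b) - G (gpt P N s \<iota>) - (1 / real N) *\<^sub>R g (gpt P N s \<iota>))"
      using zero by (simp add: sum_subtractf scaleR_sum_right)
    hence "norm ((1 / real N) *\<^sub>R (\<Sum>\<iota>\<in>grid N. g (gpt P N s \<iota>)))
        \<le> (\<Sum>\<iota>\<in>grid N. norm (G (gpt P N s \<iota> + (1 / real N) *\<^sub>R b) - G (gpt P N s \<iota>) - (1 / real N) *\<^sub>R g (gpt P N s \<iota>)))"
      by (simp add: norm_sum del: norm_scaleR)
    also have "\<dots> \<le> (\<Sum>\<iota>\<in>(grid N :: (('n \<Rightarrow> int) \<times> ('n \<Rightarrow> int)) set). (1 / real N) * \<epsilon>)" using est by (intro sum_mono) auto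
    finally have "(1 / real N) * norm (\<Sum>\<iota>\<in>grid N. g (gpt P N s \<iota>)) \<le> real (card (grid N :: (('n \<Rightarrow> int) \<times> ('n \<Rightarrow> int)) set)) * ((1 / real N) * \<epsilon>)"
      by simp
    then show "norm (\<Sum>\<iota>\<in>grid N. frechet_derivative G (at (gpt P N s \<iota>)) (bvec P t j)) \<le> \<epsilon> * real (card (grid N :: (('n \<Rightarrow> int) \<times> ('n \<Rightarrow> int)) set))"
      using N unfolding g_def b_def by (simp add: field_simps)
  qed
qed


lemma lower_bound:
  fixes h :: "complex^('n::finite option) \<Rightarrow> complex" and P :: "real^'n^'n"
  assumes cont: "continuous_on UNIV h" and r: "r \<noteq> 0"
    and pos: "\<And>x. \<exists>t>0. h x = complex_of_real t * r"
  shows "\<exists>m>0. \<forall>N>0. norm r * m * real (card (grid N :: (('n \<Rightarrow> int) \<times> ('n \<Rightarrow> int)) set))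
                     \<le> norm (\<Sum>\<iota>\<in>grid N. h (gpt P N 0 \<iota>))"
proof -
  define tf where "tf x = Re (h x / r)" for x
  have tf: "tf x > 0 \<and> h x = complex_of_real (tf x) * r" for x
  proof -
    obtain t where t: "t > 0" "h x = complex_of_real t * r" using pos by blast
    then have "h x / r = complex_of_real t" using r by simp
    then have "tf x = t" unfolding tf_def by simp
    then show ?thesis using t by simp
  qed
  have ctf: "continuous_on (CC P) tf"
    unfolding tf_def by (intro continuous_intros continuous_on_subset[OF cont]) (use r in auto)
  have ne: "CC P \<noteq> {}" using gpt_in_CC[of "(\<lambda>_. 0, \<lambda>_. 0)" 1 0 P] grid_nonempty[of 1] by auto
  obtain m where m: "m \<in> tf ` CC P" "\<And>y. y \<in> tf ` CC P \<Longrightarrow> m \<le> y"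
    using compact_attains_inf[OF compact_continuous_image[OF ctf compact_CC]] ne by blast
  have m0: "m > 0" using m(1) tf by auto
  show ?thesis
  proof (intro exI[of _ m] conjI allI impI m0)
    fix N :: nat assume N: "N > 0"
    have "(\<Sum>\<iota>\<in>grid N. h (gpt P N 0 \<iota>)) = complex_of_real (\<Sum>\<iota>\<in>grid N. tf (gpt P N 0 \<iota>)) * r"
      using tf by (simp add: sum_distrib_right)
    hence C: "norm (\<Sum>\<iota>\<in>grid N. h (gpt P N 0 \<iota>)) = \<bar>\<Sum>\<iota>\<in>grid N. tf (gpt P N 0 \<iota>)\<bar> * norm r"
      by (simp only: norm_mult norm_of_real)
    have L: "real (card (grid N :: (('n \<Rightarrow> int) \<times> ('n \<Rightarrow> int)) set)) * m \<le> (\<Sum>\<iota>\<in>grid N. tf (gpt P N 0 \<iota>))"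
    proof -
      have "(\<Sum>\<iota>\<in>(grid N :: (('n \<Rightarrow> int) \<times> ('n \<Rightarrow> int)) set). m) \<le> (\<Sum>\<iota>\<in>grid N. tf (gpt P N 0 \<iota>))"
        using m(2) gpt_in_CC[OF _ N, of _ 0 P] by (intro sum_mono) auto
      then show ?thesis by simp
    qed
    have "norm r * m * real (card (grid N :: (('n \<Rightarrow> int) \<times> ('n \<Rightarrow> int)) set))
        = norm r * (real (card (grid N :: (('n \<Rightarrow> int) \<times> ('n \<Rightarrow> int)) set)) * m)" by (simp add: mult_ac)
    also have "\<dots> \<le> norm r * (\<Sum>\<iota>\<in>grid N. tf (gpt P N 0 \<iota>))" by (rule mult_left_mono[OF L]) simp
    also have "\<dots> \<le> norm r * \<bar>\<Sum>\<iota>\<in>grid N. tf (gpt P N 0 \<iota>)\<bar>" by (rule mult_left_mono) simp_all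
    also have "\<dots> = norm (\<Sum>\<iota>\<in>grid N. h (gpt P N 0 \<iota>))" using C by (simp add: mult_ac)
    finally show "norm r * m * real (card (grid N :: (('n \<Rightarrow> int) \<times> ('n \<Rightarrow> int)) set))
                     \<le> norm (\<Sum>\<iota>\<in>grid N. h (gpt P N 0 \<iota>))" .
  qed
qed

lemma bvec_comp:
  "bvec P t j $ None = 0"
  "bvec P False j $ Some i = complex_of_real (P$i$j)"
  "bvec P True j $ Some i = \<i> * complex_of_real (P$i$j)"
  unfolding bvec_def lvec_def matrix_vector_mult_def axis_def
  by (simp_all add: if_distrib[of "\<lambda>x. _ * x"] cong: if_cong)

lemma matrix_inv_props: "invertible A \<Longrightarrow> A ** matrix_inv A = mat 1 \<and> matrix_inv A ** A = mat 1"
  unfolding matrix_inv_def invertible_def by (rule someI_ex)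

lemma decomp:
  fixes P :: "real^'n::finite^'n" and u :: "complex^('n option)"
  assumes "invertible P" "u $ None = 0"
  shows "u = (\<Sum>j\<in>UNIV. (matrix_inv P *v (\<chi> k. Re (u $ Some k))) $ j *\<^sub>R bvec P False j
                        + (matrix_inv P *v (\<chi> k. Im (u $ Some k))) $ j *\<^sub>R bvec P True j)"
proof -
  define a where "a = matrix_inv P *v (\<chi> k. Re (u $ Some k))"
  define b where "b = matrix_inv P *v (\<chi> k. Im (u $ Some k))"
  have Pa: "P *v a = (\<chi> k. Re (u $ Some k))" "P *v b = (\<chi> k. Im (u $ Some k))"
    unfolding a_def b_def matrix_vector_mul_assoc using matrix_inv_props[OF assms(1)] by simp_all
  have ci: "(\<Sum>j\<in>UNIV. P$i$j * a$j) = Re (u $ Some i)" "(\<Sum>j\<in>UNIV. P$i$j * b$j) = Re (u $ Some i) \<or> True" for i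
    using arg_cong[OF Pa(1), of "\<lambda>v. v $ i"] unfolding matrix_vector_mult_def by simp_all
  have ci2: "(\<Sum>j\<in>UNIV. P$i$j * b$j) = Im (u $ Some i)" for i
    using arg_cong[OF Pa(2), of "\<lambda>v. v $ i"] unfolding matrix_vector_mult_def by simp
  show ?thesis
    unfolding a_def[symmetric] b_def[symmetric]
    unfolding vec_eq_iff
  proof (intro allI)
    fix k :: "'n option"
    show "u $ k = (\<Sum>j\<in>UNIV. a $ j *\<^sub>R bvec P False j + b $ j *\<^sub>R bvec P True j) $ k"
    proof (cases k)
      case None then show ?thesis using assms(2) by (simp add: sum_component bvec_comp)
    next
      case (Some i)
      have "(\<Sum>j\<in>UNIV. a $ j *\<^sub>R bvec P False j + b $ j *\<^sub>R bvec P True j) $ k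
          = (\<Sum>j\<in>UNIV. complex_of_real (P$i$j * a$j) + \<i> * complex_of_real (P$i$j * b$j))"
      proof -
        have cs: "\<And>c z. (c::real) *\<^sub>R (z::complex) = complex_of_real c * z" by (simp add: scaleR_conv_of_real)
        show ?thesis unfolding Some by (simp add: sum_component vector_scaleR_component bvec_comp cs algebra_simps)
      qed
      also have "\<dots> = complex_of_real (\<Sum>j\<in>UNIV. P$i$j * a$j) + \<i> * complex_of_real (\<Sum>j\<in>UNIV. P$i$j * b$j)"
        by (simp add: sum.distrib sum_distrib_left)
      also have "\<dots> = u $ k" unfolding ci(1) ci2 Some by (simp add: complex_eq[symmetric])
      finally show ?thesis by simp
    qed
  qed
qed


lemma gpt_s: "gpt P N s \<iota> = gpt P N 0 \<iota> + s *\<^sub>R axis None 1"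
proof -
  have cs: "\<And>c z. (c::real) *\<^sub>R (z::complex) = complex_of_real c * z" by (simp add: scaleR_conv_of_real)
  have "spt s = spt 0 + s *\<^sub>R (axis None 1 :: complex^('a option))"
    unfolding spt_def vec_eq_iff by (auto simp: vector_scaleR_component cs axis_def split: option.splits)
  then show ?thesis unfolding gpt_def by (simp add: algebra_simps)
qed

lemma deriv_decomp:
  assumes dF: "F differentiable (at x)" and invP: "invertible P" and uz: "u $ None = 0"
  shows "frechet_derivative F (at x) u =
    (\<Sum>j\<in>UNIV. complex_of_real ((matrix_inv P *v (\<chi> k. Re (u $ Some k))) $ j) * frechet_derivative F (at x) (bvec P False j)
             + complex_of_real ((matrix_inv P *v (\<chi> k. Im (u $ Some k))) $ j) * frechet_derivative F (at x) (bvec P True j))"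
proof -
  have lin: "linear (frechet_derivative F (at x))"
    using has_derivative_linear dF frechet_derivative_works by blast
  have cs: "\<And>c z. (c::real) *\<^sub>R (z::complex) = complex_of_real c * z" by (simp add: scaleR_conv_of_real)
  show ?thesis
    apply (subst decomp[OF invP uz])
    apply (simp add: linear_sum[OF lin] linear_add[OF lin] linear_cmul[OF lin] cs)
    done
qed

lemma sum_exchange3:
  fixes X Y :: "'a \<Rightarrow> 'b \<Rightarrow> 'c \<Rightarrow> complex"
  shows "(\<Sum>x\<in>A. \<Sum>i\<in>B. c i * (\<Sum>j\<in>C. a i j * X x i j + b i j * Y x i j))
       = (\<Sum>i\<in>B. c i * (\<Sum>j\<in>C. a i j * (\<Sum>x\<in>A. X x i j) + b i j * (\<Sum>x\<in>A. Y x i j)))"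
proof -
  have "(\<Sum>x\<in>A. \<Sum>i\<in>B. c i * (\<Sum>j\<in>C. a i j * X x i j + b i j * Y x i j))
      = (\<Sum>x\<in>A. \<Sum>i\<in>B. \<Sum>j\<in>C. c i * (a i j * X x i j + b i j * Y x i j))"
    by (simp add: sum_distrib_left)
  also have "\<dots> = (\<Sum>i\<in>B. \<Sum>j\<in>C. \<Sum>x\<in>A. c i * (a i j * X x i j + b i j * Y x i j))"
    by (simp only: sum.swap[of _ A])
  also have "\<dots> = (\<Sum>i\<in>B. c i * (\<Sum>j\<in>C. a i j * (\<Sum>x\<in>A. X x i j) + b i j * (\<Sum>x\<in>A. Y x i j)))"
    by (simp add: sum_distrib_left sum.distrib algebra_simps)
  finally show ?thesis .
qed

theorem core:
  fixes P :: "real^'n^'n" and M :: "int^'n::finite^'n" and lam :: "'n \<Rightarrow> real"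
    and h :: "complex^('n option) \<Rightarrow> complex" and F :: "'i \<Rightarrow> complex^('n option) \<Rightarrow> complex"
    and u :: "'i \<Rightarrow> complex^('n option)" and c :: "'i \<Rightarrow> complex" and \<kappa> :: real
  assumes invP: "invertible P" and detM: "det M = 1"
    and PM: "\<And>i a. exp (lam i) * (P *v a) $ i = (P *v (Mr M *v a)) $ i"
    and finI: "finite I"
    and dh: "\<And>x. h differentiable (at x)"
    and dF: "\<And>i x. i \<in> I \<Longrightarrow> F i differentiable (at x)"
    and cF: "\<And>i v. i \<in> I \<Longrightarrow> continuous_on UNIV (\<lambda>x. frechet_derivative (F i) (at x) v)"
    and perh: "periodic P h" and perF: "\<And>i. i \<in> I \<Longrightarrow> periodic P (F i)"
    and uz: "\<And>i. i \<in> I \<Longrightarrow> u i $ None = 0"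
    and deq: "\<And>x. frechet_derivative h (at x) (axis None 1) = (\<Sum>i\<in>I. c i * frechet_derivative (F i) (at x) (u i))"
    and tw: "\<And>x. h (twist lam x) = complex_of_real \<kappa> * h x" and \<kappa>: "\<kappa> \<noteq> 1"
    and r: "r \<noteq> 0" and pos: "\<And>x. \<exists>t>0. h x = complex_of_real t * r"
  shows False
proof -
  define cR where "cR i = matrix_inv P *v (\<chi> k. Re (u i $ Some k))" for i
  define cI where "cI i = matrix_inv P *v (\<chi> k. Im (u i $ Some k))" for i
  define DF where "DF i x v = frechet_derivative (F i) (at x) v" for i x v
  define K where "K = (\<Sum>i\<in>I. norm (c i) * (\<Sum>j\<in>UNIV. \<bar>cR i $ j\<bar> + \<bar>cI i $ j\<bar>))"
  have K0: "K \<ge> 0" unfolding K_def by (intro sum_nonneg mult_nonneg_nonneg) auto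
  have conth: "continuous_on UNIV h"
    using dh by (intro continuous_at_imp_continuous_on ballI differentiable_imp_continuous_within) auto
  obtain m where m0: "m > 0" and mb: "\<And>N. N > 0 \<Longrightarrow> norm r * m * real (card (grid N :: (('n \<Rightarrow> int) \<times> ('n \<Rightarrow> int)) set))
                     \<le> norm (\<Sum>\<iota>\<in>grid N. h (gpt P N 0 \<iota>))"
    using lower_bound[OF conth r pos, of P] by blast
  define \<epsilon> where "\<epsilon> = \<bar>\<kappa> - 1\<bar> * norm r * m / (4 * (K + 1))"
  have e0: "\<epsilon> > 0" unfolding \<epsilon>_def using \<kappa> r m0 K0 by (auto intro!: divide_pos_pos mult_pos_pos)
  define Pr where "Pr N i t j \<longleftrightarrow> (\<forall>s\<in>{0..1}.
       norm (\<Sum>\<iota>\<in>grid N. DF i (gpt P N s \<iota>) (bvec P t j)) \<le> \<epsilon> * real (card (grid N :: (('n \<Rightarrow> int) \<times> ('n \<Rightarrow> int)) set)))"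
    for N i t j
  have ev1: "eventually (\<lambda>N. Pr N i t j) sequentially" if i: "i \<in> I" for i t j
    unfolding Pr_def DF_def
    apply (rule uniform_diff_est)
    using i dF cF perF e0 by auto
  have "\<forall>i\<in>I. eventually (\<lambda>N. \<forall>t\<in>UNIV. \<forall>j\<in>UNIV. Pr N i t j) sequentially"
  proof
    fix i assume i: "i \<in> I"
    have "\<forall>t\<in>UNIV. eventually (\<lambda>N. \<forall>j\<in>UNIV. Pr N i t j) sequentially"
    proof
      fix t :: bool
      have "\<forall>j\<in>UNIV. eventually (\<lambda>N. Pr N i t j) sequentially" using ev1[OF i] by blast
      then show "eventually (\<lambda>N. \<forall>j\<in>UNIV. Pr N i t j) sequentially"
        by (intro eventually_ball_finite[OF finite[of UNIV]])
    qed
    then show "eventually (\<lambda>N. \<forall>t\<in>UNIV. \<forall>j\<in>UNIV. Pr N i t j) sequentially"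
      by (intro eventually_ball_finite[OF finite[of UNIV]])
  qed
  then have ev: "eventually (\<lambda>N. \<forall>i\<in>I. \<forall>t\<in>UNIV. \<forall>j\<in>UNIV. Pr N i t j) sequentially"
    by (rule eventually_ball_finite[OF finI])
  then obtain N0 where N0: "\<And>N. N \<ge> N0 \<Longrightarrow> \<forall>i\<in>I. \<forall>t\<in>UNIV. \<forall>j\<in>UNIV. Pr N i t j"
    unfolding eventually_sequentially by blast
  define N where "N = N0 + 1"
  have N: "N > 0" unfolding N_def by simp
  define cd where "cd = real (card (grid N :: (('n \<Rightarrow> int) \<times> ('n \<Rightarrow> int)) set))"
  have cd0: "cd > 0" unfolding cd_def using finite_grid grid_nonempty[OF N] card_gt_0_iff by fastforce
  have est: "\<And>i t j s. i \<in> I \<Longrightarrow> s \<in> {0..1} \<Longrightarrow> norm (\<Sum>\<iota>\<in>grid N. DF i (gpt P N s \<iota>) (bvec P t j)) \<le> \<epsilon> * cd"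
    using N0[of N] unfolding N_def cd_def Pr_def by auto
  define Q where "Q s = (\<Sum>\<iota>\<in>grid N. h (gpt P N s \<iota>))" for s
  define Q' where "Q' s = (\<Sum>\<iota>\<in>grid N. frechet_derivative h (at (gpt P N s \<iota>)) (axis None 1))" for s
  have Qd: "(Q has_vector_derivative Q' s) (at s within {0..1})" for s
  proof -
    have "((\<lambda>s. \<Sum>\<iota>\<in>grid N. h (gpt P N 0 \<iota> + s *\<^sub>R axis None 1)) has_vector_derivative
          (\<Sum>\<iota>\<in>grid N. frechet_derivative h (at (gpt P N 0 \<iota> + s *\<^sub>R axis None 1)) (axis None 1))) (at s within {0..1})"
      by (intro has_vector_derivative_sum line_deriv dh)
    moreover have "Q = (\<lambda>s. \<Sum>\<iota>\<in>grid N. h (gpt P N 0 \<iota> + s *\<^sub>R axis None 1))"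
      unfolding Q_def by (intro ext sum.cong refl arg_cong[where f=h] gpt_s)
    moreover have "Q' s = (\<Sum>\<iota>\<in>grid N. frechet_derivative h (at (gpt P N 0 \<iota> + s *\<^sub>R axis None 1)) (axis None 1))"
      unfolding Q'_def by (intro sum.cong refl arg_cong[where f="\<lambda>x. frechet_derivative h (at x) (axis None 1)"] gpt_s)
    ultimately show ?thesis by simp
  qed
  have Q'b: "norm (Q' s) \<le> K * (\<epsilon> * cd)" if s: "s \<in> {0..1}" for s
  proof -
    have pt: "frechet_derivative h (at x) (axis None 1) = (\<Sum>i\<in>I. c i * (\<Sum>j\<in>UNIV. complex_of_real (cR i $ j) * DF i x (bvec P False j)
             + complex_of_real (cI i $ j) * DF i x (bvec P True j)))" for x
      unfolding deq
    proof (rule sum.cong[OF refl])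
      fix i assume i: "i \<in> I"
      show "c i * frechet_derivative (F i) (at x) (u i) = c i * (\<Sum>j\<in>UNIV. complex_of_real (cR i $ j) * DF i x (bvec P False j)
             + complex_of_real (cI i $ j) * DF i x (bvec P True j))"
        unfolding DF_def cR_def cI_def deriv_decomp[OF dF[OF i] invP uz[OF i]] ..
    qed
    have "Q' s = (\<Sum>\<iota>\<in>grid N. \<Sum>i\<in>I. c i * (\<Sum>j\<in>UNIV. complex_of_real (cR i $ j) * DF i (gpt P N s \<iota>) (bvec P False j)
             + complex_of_real (cI i $ j) * DF i (gpt P N s \<iota>) (bvec P True j)))"
      unfolding Q'_def pt ..
    also have "\<dots> = (\<Sum>i\<in>I. c i * (\<Sum>j\<in>UNIV. complex_of_real (cR i $ j) * (\<Sum>\<iota>\<in>grid N. DF i (gpt P N s \<iota>) (bvec P False j))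
             + complex_of_real (cI i $ j) * (\<Sum>\<iota>\<in>grid N. DF i (gpt P N s \<iota>) (bvec P True j))))"
      by (rule sum_exchange3)
    finally have eq: "Q' s = \<dots>" .
    have "norm (Q' s) \<le> (\<Sum>i\<in>I. norm (c i) * (\<Sum>j\<in>UNIV. \<bar>cR i $ j\<bar> * (\<epsilon> * cd) + \<bar>cI i $ j\<bar> * (\<epsilon> * cd)))"
      unfolding eq
    proof (intro order_trans[OF norm_sum] sum_mono)
      fix i assume i: "i \<in> I"
      show "norm (c i * (\<Sum>j\<in>UNIV. complex_of_real (cR i $ j) * (\<Sum>\<iota>\<in>grid N. DF i (gpt P N s \<iota>) (bvec P False j))
             + complex_of_real (cI i $ j) * (\<Sum>\<iota>\<in>grid N. DF i (gpt P N s \<iota>) (bvec P True j))))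
            \<le> norm (c i) * (\<Sum>j\<in>UNIV. \<bar>cR i $ j\<bar> * (\<epsilon> * cd) + \<bar>cI i $ j\<bar> * (\<epsilon> * cd))"
        unfolding norm_mult
      proof (intro mult_left_mono order_trans[OF norm_sum] sum_mono norm_ge_zero)
        fix j
        show "norm (complex_of_real (cR i $ j) * (\<Sum>\<iota>\<in>grid N. DF i (gpt P N s \<iota>) (bvec P False j))
             + complex_of_real (cI i $ j) * (\<Sum>\<iota>\<in>grid N. DF i (gpt P N s \<iota>) (bvec P True j)))
             \<le> \<bar>cR i $ j\<bar> * (\<epsilon> * cd) + \<bar>cI i $ j\<bar> * (\<epsilon> * cd)"
          using est[OF i s, of False j] est[OF i s, of True j]
          by (intro order_trans[OF norm_triangle_ineq] add_mono)
             (auto simp: norm_mult intro: mult_left_mono)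
      qed
    qed
    also have "\<dots> = K * (\<epsilon> * cd)"
    proof -
      have "\<And>i. (\<Sum>j\<in>UNIV. \<bar>cR i $ j\<bar> * (\<epsilon> * cd) + \<bar>cI i $ j\<bar> * (\<epsilon> * cd)) = (\<Sum>j\<in>UNIV. \<bar>cR i $ j\<bar> + \<bar>cI i $ j\<bar>) * (\<epsilon> * cd)"
        by (simp only: distrib_right[symmetric] sum_distrib_right)
      then show ?thesis unfolding K_def by (simp only: sum_distrib_right[of _ I] mult.assoc)
    qed
    finally show ?thesis .
  qed
  have "norm (Q 1 - Q 0 - (1 - 0) *\<^sub>R Q' 0) \<le> norm (1 - 0::real) * (2 * (K * (\<epsilon> * cd)))"
  proof (rule vector_differentiable_bound_linearization)
    show "\<And>x. x \<in> {0..1} \<Longrightarrow> (Q has_vector_derivative Q' x) (at x within {0..1})" by (rule Qd)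
    show "closed_segment 0 (1::real) \<subseteq> {0..1}" by (simp add: closed_segment_eq_real_ivl)
    show "(0::real) \<in> {0..1}" by simp
    fix x :: real assume x: "x \<in> {0..1}"
    have "norm (Q' x - Q' 0) \<le> norm (Q' x) + norm (Q' 0)" by (rule norm_triangle_ineq4)
    also have "\<dots> \<le> K * (\<epsilon> * cd) + K * (\<epsilon> * cd)" using Q'b[OF x] Q'b[of 0] by simp
    finally show "norm (Q' x - Q' 0) \<le> 2 * (K * (\<epsilon> * cd))" by simp
  qed
  then have "norm (Q 1 - Q 0) \<le> norm (Q' 0) + 2 * (K * (\<epsilon> * cd))"
    using norm_triangle_ineq2[of "Q 1 - Q 0" "Q' 0"] by simp
  also have "\<dots> \<le> 3 * (K * (\<epsilon> * cd))" using Q'b[of 0] by simp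
  finally have Qdiff: "norm (Q 1 - Q 0) \<le> 3 * (K * (\<epsilon> * cd))" .
  have "Q 1 = (\<Sum>\<iota>\<in>grid N. h (twist lam (gpt P N 0 \<iota>)))"
    unfolding Q_def by (rule sum_twist[OF perh N detM PM])
  also have "\<dots> = complex_of_real \<kappa> * Q 0" unfolding Q_def tw by (simp add: sum_distrib_left)
  finally have "Q 1 - Q 0 = complex_of_real (\<kappa> - 1) * Q 0" by (simp add: algebra_simps)
  then have "norm (Q 1 - Q 0) = \<bar>\<kappa> - 1\<bar> * norm (Q 0)" by (simp only: norm_mult norm_of_real)
  moreover have "norm r * m * cd \<le> norm (Q 0)" unfolding Q_def cd_def by (rule mb[OF N])
  ultimately have "\<bar>\<kappa> - 1\<bar> * (norm r * m * cd) \<le> 3 * (K * (\<epsilon> * cd))"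
    using Qdiff by (smt (verit, best) abs_ge_zero mult_left_mono)
  moreover have "3 * (K * (\<epsilon> * cd)) < \<bar>\<kappa> - 1\<bar> * (norm r * m * cd)"
  proof -
    have A: "\<bar>\<kappa> - 1\<bar> * norm r * m > 0" using \<kappa> r m0 by simp
    have "3 * (K * \<epsilon>) = (3 * K / (4 * (K + 1))) * (\<bar>\<kappa> - 1\<bar> * norm r * m)"
      unfolding \<epsilon>_def using K0 by (simp add: field_simps)
    also have "\<dots> < 1 * (\<bar>\<kappa> - 1\<bar> * norm r * m)"
      by (rule mult_strict_right_mono[OF _ A]) (use K0 in \<open>simp add: field_simps\<close>)
    finally have "3 * (K * \<epsilon>) < \<bar>\<kappa> - 1\<bar> * norm r * m" by simp
    then have "3 * (K * \<epsilon>) * cd < \<bar>\<kappa> - 1\<bar> * norm r * m * cd" using cd0 by simp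
    then show ?thesis by (simp add: mult_ac)
  qed
  ultimately show False by simp
qed


lemma smooth_diff: "smooth_map f \<Longrightarrow> f differentiable (at x)"
  by (erule smooth_map.cases) auto

lemma smooth_deriv: "smooth_map f \<Longrightarrow> smooth_map (\<lambda>x. frechet_derivative f (at x) v)"
  by (erule smooth_map.cases) auto

lemma smooth_cont_deriv: "smooth_map f \<Longrightarrow> continuous_on UNIV (\<lambda>x. frechet_derivative f (at x) v)"
  using smooth_diff[OF smooth_deriv[of f v]]
  by (intro continuous_at_imp_continuous_on ballI differentiable_imp_continuous_within) auto

lemma lat0:
  "(0, (\<chi> i. complex_of_real ((P *v ivec 1 a) $ i) + \<i> * complex_of_real ((P *v ivec 1 b) $ i))) \<in> nak_lattice \<tau> P"
proof -
  have "(0::complex, (\<chi> i. complex_of_real ((P *v ivec 1 a) $ i) + \<i> * complex_of_real ((P *v ivec 1 b) $ i)))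
     = (of_int 0 + \<i> * complex_of_real (\<tau> * of_int 0),
        (\<chi> i. complex_of_real ((P *v (\<chi> j. real_of_int ((\<chi> j. a j) $ j))) $ i)
              + \<i> * complex_of_real ((P *v (\<chi> j. real_of_int ((\<chi> j. b j) $ j))) $ i)))"
    unfolding ivec_def by simp
  then show ?thesis unfolding nak_lattice_def by blast
qed

lemma lat1: "(1, 0) \<in> nak_lattice \<tau> P"
proof -
  have "(1::complex, 0::complex^'a)
     = (of_int 1 + \<i> * complex_of_real (\<tau> * of_int 0),
        (\<chi> i. complex_of_real ((P *v (\<chi> j. real_of_int ((0::int^'a) $ j))) $ i)
              + \<i> * complex_of_real ((P *v (\<chi> j. real_of_int ((0::int^'a) $ j))) $ i)))"
    by (simp add: vec_eq_iff matrix_vector_mult_def)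
  then show ?thesis unfolding nak_lattice_def by blast
qed

lemma ltrans_lat0:
  "nak_ltrans lam (0, (\<chi> i. complex_of_real ((P *v ivec 1 a) $ i) + \<i> * complex_of_real ((P *v ivec 1 b) $ i))) x
   = x + lvec P (ivec 1 a) (ivec 1 b)"
  unfolding nak_ltrans_def lvec_def vec_eq_iff by (auto split: option.splits)

lemma dltrans_lat0:
  "nak_dltrans lam (0, z) v = v"
  unfolding nak_dltrans_def vec_eq_iff by (auto split: option.splits)

lemma ltrans_lat1: "nak_ltrans lam (1, 0) x = twist lam x"
  unfolding nak_ltrans_def twist_def vec_eq_iff by (auto split: option.splits)

lemma dltrans_lat1: "nak_dltrans lam (1, 0) (axis (Some k) c) = exp (lam k) *\<^sub>R axis (Some k) c"
proof -
  have cs: "\<And>c z. (c::real) *\<^sub>R (z::complex) = complex_of_real c * z" by (simp add: scaleR_conv_of_real)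
  show ?thesis unfolding nak_dltrans_def vec_eq_iff by (auto simp: vector_scaleR_component cs axis_def split: option.splits)
qed

lemma good_subset:
  fixes lam :: "'n::finite \<Rightarrow> real"
  assumes "CARD('n) \<ge> 2" "1 \<le> p" "p \<le> CARD('n) - 1" "\<forall>i. lam i \<noteq> 0"
  shows "\<exists>K. card K = p \<and> (\<Sum>k\<in>K. lam k) \<noteq> 0"
proof (rule ccontr)
  assume "\<not> (\<exists>K. card K = p \<and> (\<Sum>k\<in>K. lam k) \<noteq> 0)"
  hence H: "\<And>K. card K = p \<Longrightarrow> (\<Sum>k\<in>K. lam k) = 0" by auto
  have eq: "lam i = lam j" for i j
  proof (cases "i = j")
    case False
    have "card (UNIV - {i, j}) = CARD('n) - 2" using False by (simp add: card_Diff_subset)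
    hence "p - 1 \<le> card (UNIV - {i, j})" using assms by simp
    then obtain S where S: "S \<subseteq> UNIV - {i, j}" "card S = p - 1" "finite S"
      by (meson obtain_subset_with_card_n)
    have iS: "i \<notin> S" "j \<notin> S" using S(1) by auto
    have "card (insert i S) = p" "card (insert j S) = p" using S(2,3) iS assms(2) by simp_all
    hence "(\<Sum>k\<in>insert i S. lam k) = 0" "(\<Sum>k\<in>insert j S. lam k) = 0" using H by blast+
    thus ?thesis using S(3) iS by simp
  qed simp
  have pc: "p \<le> card (UNIV :: 'n set)" using assms(3) by simp
  from obtain_subset_with_card_n[OF pc] obtain K :: "'n set" where K: "card K = p" by blast
  obtain i0 :: 'n where True by simp
  have "(\<Sum>k\<in>K. lam k) = (\<Sum>k\<in>K. lam i0)" using eq by (intro sum.cong) auto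
  also have "\<dots> = real p * lam i0" using K by simp
  finally have "real p * lam i0 = 0" using H[OF K] by simp
  then show False using assms(2,4) by simp
qed

lemma PM_lemma:
  fixes P :: "real^'n::finite^'n" and M :: "int^'n^'n"
  assumes "invertible P"
    and "P ** (\<chi> i j. real_of_int (M $ i $ j)) ** matrix_inv P = (\<chi> i j. if i = j then exp (lam i) else 0)"
  shows "exp (lam i) * (P *v a) $ i = (P *v (Mr M *v a)) $ i"
proof -
  define D :: "real^'n^'n" where "D = (\<chi> i j. if i = j then exp (lam i) else 0)"
  have inv: "matrix_inv P ** P = mat 1" using matrix_inv_props[OF assms(1)] by simp
  have "(P ** Mr M ** matrix_inv P) ** P = P ** Mr M ** (matrix_inv P ** P)"
    by (simp only: matrix_mul_assoc)
  then have "P ** Mr M = (P ** Mr M ** matrix_inv P) ** P" by (simp add: inv)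
  also have "\<dots> = D ** P" using assms(2) unfolding D_def Mr_def by simp
  finally have PMD: "P ** Mr M = D ** P" .
  have "(P *v (Mr M *v a)) = D *v (P *v a)"
    by (simp add: matrix_vector_mul_assoc PMD)
  also have "(D *v (P *v a)) $ i = exp (lam i) * (P *v a) $ i"
  proof -
    have "(D *v (P *v a)) $ i = (\<Sum>j\<in>UNIV. (if i = j then exp (lam i) else 0) * (P *v a) $ j)"
      unfolding D_def matrix_vector_mult_def by simp
    also have "\<dots> = (\<Sum>j\<in>UNIV. if i = j then exp (lam i) * (P *v a) $ j else 0)" by (intro sum.cong) auto
    also have "\<dots> = exp (lam i) * (P *v a) $ i" by simp
    finally show ?thesis .
  qed
  finally show ?thesis by simp
qed

lemma sum_div2: "(\<Sum>j<2*p. f (j div 2)) = 2 * (\<Sum>t<p. f t)" for f :: "nat \<Rightarrow> real"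
proof (induction p)
  case 0 then show ?case by simp
next
  case (Suc p)
  have "{..<2 * Suc p} = insert (2*p+1) (insert (2*p) {..<2*p})" by auto
  then have "(\<Sum>j<2 * Suc p. f (j div 2)) = f p + f p + (\<Sum>j<2*p. f (j div 2))" by simp
  then show ?case using Suc by simp
qed


theorem main_contra:
  fixes M :: "int^'n^'n" and P :: "real^'n^'n" and lam :: "'n::finite \<Rightarrow> real"
    and \<tau> :: real and p :: nat and \<Omega> :: "complex^('n option) \<Rightarrow> ('n option) cform"
  assumes card2: "CARD('n) \<ge> 2" and detM: "det M = 1" and invP: "invertible P"
    and diag: "P ** (\<chi> i j. real_of_int (M $ i $ j)) ** matrix_inv P = (\<chi> i j. if i = j then exp (lam i) else 0)"
    and lam0: "\<forall>i. lam i \<noteq> 0" and p1: "1 \<le> p" and p2: "p \<le> CARD('n) - 1"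
    and NK: "nakamura_p_kaehler lam P \<tau> p \<Omega>"
  shows False
proof -
  have pk: "p_kaehler_form p \<Omega>"
    and inv: "\<And>\<gamma> x v. \<gamma> \<in> nak_lattice \<tau> P \<Longrightarrow> \<Omega> (nak_ltrans lam \<gamma> x) (\<lambda>j. nak_dltrans lam \<gamma> (v j)) = \<Omega> x v"
    using NK unfolding nakamura_p_kaehler_def by auto
  have sm: "\<And>v. smooth_map (\<lambda>x. \<Omega> x v)"
    and ptw: "\<And>x. is_pp_covector p (\<Omega> x) \<and> is_real_covector (\<Omega> x) \<and> transverse p (\<Omega> x)"
    and closed: "ext_d (2*p) \<Omega> = (\<lambda>x v. 0)"
    using pk unfolding p_kaehler_form_def by auto
  obtain K where K: "card K = p" "(\<Sum>k\<in>K. lam k) \<noteq> 0" using good_subset[OF card2 p1 p2 lam0] by blast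
  have finK: "finite K" by simp
  obtain Ks where Ks: "distinct Ks" "set Ks = K" using finite_distinct_list[OF finK] by blast
  have lKs: "length Ks = p" using distinct_card[OF Ks(1)] Ks(2) K(1) by simp
  obtain Rs where Rs: "distinct Rs" "set Rs = UNIV - Some ` K"
    using finite_distinct_list[of "UNIV - Some ` K"] by auto
  define kl where "kl = map Some Ks @ Rs"
  have kd: "distinct kl" using Ks Rs unfolding kl_def by (auto simp: distinct_map inj_on_def)
  have ks: "set kl = UNIV" using Ks Rs unfolding kl_def by auto
  define m where "m = CARD('n option)"
  have lk: "length kl = m"
  proof -
    have "card (set kl) = length kl" by (rule distinct_card[OF kd])
    then show ?thesis unfolding m_def ks by simp
  qed
  have pm: "p < m" using p2 card2 unfolding m_def card_option by simp
  define q where "q = m - p"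
  have kt: "\<And>t. t < p \<Longrightarrow> kl ! t = Some (Ks ! t)" unfolding kl_def using lKs by (simp add: nth_append)
  define U where "U = pairU kl"
  define ds where "ds = drop p kl"
  have lds: "length ds = q" unfolding ds_def q_def using lk by simp
  have dds: "distinct ds" unfolding ds_def using kd by simp
  define Z where "Z = {v :: complex^('n option). \<forall>t\<in>set ds. v $ t = 0}"
  have UZ: "\<forall>i<2*p. U i \<in> Z"
  proof (intro allI impI)
    fix i assume i: "i < 2*p"
    have "i div 2 < p" using i by simp
    have "take p kl ! (i div 2) = kl ! (i div 2)" using \<open>i div 2 < p\<close> by simp
    moreover have "i div 2 < length (take p kl)" using \<open>i div 2 < p\<close> pm lk by simp
    ultimately have "kl ! (i div 2) \<in> set (take p kl)" by (metis nth_mem)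
    hence "kl ! (i div 2) \<notin> set ds" unfolding ds_def using set_take_disj_set_drop_if_distinct[OF kd, of p p] by auto
    then show "U i \<in> Z" unfolding U_def pairU_def Z_def axis_def by auto
  qed
  define \<psi> where "\<psi> = wedge_list (map (\<lambda>k. oneform (\<lambda>x. x $ k)) ds)"
  have \<psi>dec: "decomposable_k0 q \<psi>"
    unfolding decomposable_k0_def
  proof (intro exI[of _ "\<lambda>l j. if j = ds ! l then 1 else 0"])
    have "map (\<lambda>l. (\<lambda>v. \<Sum>j\<in>UNIV. (if j = ds ! l then 1 else 0) * v 0 $ j)) [0..<q]
        = map (\<lambda>l. oneform (\<lambda>x. x $ (ds ! l))) [0..<q]"
    proof -
      have "(\<lambda>v. \<Sum>j\<in>UNIV. (if j = ds ! l then 1 else 0) * v 0 $ j) = oneform (\<lambda>x. x $ (ds ! l))" for l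
      proof (rule ext)
        fix v :: "nat \<Rightarrow> complex^('n option)"
        have "(\<Sum>j\<in>UNIV. (if j = ds ! l then 1 else 0) * v 0 $ j) = (\<Sum>j\<in>UNIV. if j = ds ! l then v 0 $ j else 0)"
          by (intro sum.cong) auto
        also have "\<dots> = v 0 $ (ds ! l)" by simp
        finally show "(\<Sum>j\<in>UNIV. (if j = ds ! l then 1 else 0) * v 0 $ j) = oneform (\<lambda>x. x $ (ds ! l)) v"
          unfolding oneform_def .
      qed
      then show ?thesis by simp
    qed
    also have "\<dots> = map (\<lambda>k. oneform (\<lambda>x. x $ k)) ds"
    proof -
      have "map (\<lambda>k. oneform (\<lambda>x. x $ k)) ds = map (\<lambda>k. oneform (\<lambda>x. x $ k)) (map ((!) ds) [0..<q])"
        using map_nth[of ds] lds by simp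
      then show ?thesis by simp
    qed
    finally show "\<psi> = wedge_list (map (\<lambda>l. (\<lambda>v. \<Sum>j\<in>UNIV. (if j = ds ! l then 1 else 0) * v 0 $ j)) [0..<q])"
      unfolding \<psi>_def by simp
  qed
  have \<psi>nz: "\<psi> \<noteq> (\<lambda>v. 0)"
  proof
    assume "\<psi> = (\<lambda>v. 0)"
    moreover have "\<psi> (\<lambda>i. axis (ds ! i) 1) = 1" unfolding \<psi>_def by (rule wedge_list_coord_eval[OF dds])
    ultimately show False by simp
  qed
  define \<eta> where "\<eta> = (\<lambda>v. sigma_const q * wedge q q \<psi> (cnj_form \<psi>) v)"
  have l\<psi>: "local_form q \<psi>"
    unfolding \<psi>_def using wedge_list_local[of "map (\<lambda>k. oneform (\<lambda>x. x $ k)) ds"] oneform_local lds by auto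
  have v\<psi>: "vanish_on q Z \<psi>"
  proof -
    have "\<forall>\<alpha>\<in>set (map (\<lambda>k. oneform (\<lambda>x. x $ k)) ds). vanish_on 1 Z \<alpha>"
    proof
      fix \<alpha> assume "\<alpha> \<in> set (map (\<lambda>k. oneform (\<lambda>x. x $ k)) ds)"
      then obtain k where k: "k \<in> set ds" "\<alpha> = oneform (\<lambda>x. x $ k)" by auto
      show "vanish_on 1 Z \<alpha>" unfolding k(2) by (rule oneform_vanish) (use k(1) in \<open>auto simp: Z_def\<close>)
    qed
    then show ?thesis unfolding \<psi>_def using wedge_list_vanish lds by fastforce
  qed
  have \<eta>l: "local_form (2*q) \<eta>"
    unfolding \<eta>_def mult_2 by (intro scale_local wedge_local l\<psi> cnj_form_local)
  have \<eta>a: "alt_form (2*q) \<eta>"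
    unfolding \<eta>_def mult_2 by (intro scale_alt wedge_alt)
  have \<eta>v: "vanish_on (2*q) Z \<eta>"
    unfolding \<eta>_def mult_2 by (intro scale_vanish wedge_vanish v\<psi> cnj_form_vanish)
  define A where "A = \<eta> (\<lambda>i. U (2*p + i))"
  define B where "B = std_vol U"
  have B0: "B \<noteq> 0" unfolding B_def U_def by (rule std_vol_pairU[OF kd ks])
  define h where "h x = \<Omega> x U" for x
  have hA: "\<exists>t>0. h x * A = complex_of_real t * B" for x
  proof -
    have tr: "transverse p (\<Omega> x)" using ptw by blast
    have qq: "CARD('n option) - p = q" unfolding q_def m_def ..
    obtain t where t: "t > 0" "wedge (2*p) (2*q) (\<Omega> x) \<eta> = (\<lambda>v. complex_of_real t * std_vol v)"
      using tr \<psi>dec \<psi>nz unfolding transverse_def Let_def qq \<eta>_def by blast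
    have "wedge (2*p) (2*q) (\<Omega> x) \<eta> U = \<Omega> x U * \<eta> (\<lambda>i. U (2*p + i))"
      by (rule wedge_pair_eval[OF pp_local pp_alt \<eta>l \<eta>a \<eta>v UZ]) (use ptw in blast)+
    then show ?thesis using t unfolding h_def A_def B_def by auto
  qed
  have A0: "A \<noteq> 0" using hA[of 0] B0 by fastforce
  have hpos: "\<exists>t>0. h x = complex_of_real t * (B / A)" for x
    using hA[of x] A0 by (auto simp: field_simps)
  have rnz: "B / A \<noteq> 0" using A0 B0 by simp
  define V0 where "V0 = (\<lambda>j. case j of 0 \<Rightarrow> axis None 1 | Suc j' \<Rightarrow> U j')"
  define F where "F i = (\<lambda>y. \<Omega> y (\<lambda>j. if j < i then V0 j else V0 (Suc j)))" for i
  define c where "c i = - ((-1) ^ i :: complex)" for i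
  have F0: "F 0 = h" unfolding F_def h_def V0_def by simp
  have deq: "frechet_derivative h (at x) (axis None 1) = (\<Sum>i\<in>{1..2*p}. c i * frechet_derivative (F i) (at x) (V0 i))" for x
  proof -
    have "ext_d (2*p) \<Omega> x V0 = 0" using closed by simp
    then have "(\<Sum>i\<le>2*p. (-1) ^ i * frechet_derivative (F i) (at x) (V0 i)) = 0"
      unfolding ext_d_def F_def by simp
    moreover have "{..2*p} = insert 0 {1..2*p}" by auto
    ultimately have "frechet_derivative h (at x) (V0 0) + (\<Sum>i\<in>{1..2*p}. (-1) ^ i * frechet_derivative (F i) (at x) (V0 i)) = 0"
      using F0 by simp
    then show ?thesis unfolding c_def V0_def by (simp add: sum_negf eq_neg_iff_add_eq_0 add.commute)
  qed
  define S where "S = (\<Sum>k\<in>K. lam k)"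
  have tw: "h (twist lam x) = complex_of_real (exp (- 2 * S)) * h x" for x
  proof -
    have "\<Omega> (nak_ltrans lam (1, 0) x) (\<lambda>j. nak_dltrans lam (1, 0) (U j)) = \<Omega> x U"
      by (rule inv[OF lat1])
    then have e1: "\<Omega> (twist lam x) (\<lambda>j. nak_dltrans lam (1, 0) (U j)) = h x" unfolding ltrans_lat1 h_def .
    define r where "r j = exp (lam (Ks ! (j div 2)))" for j
    have "\<forall>j<2*p. nak_dltrans lam (1, 0) (U j) = r j *\<^sub>R U j"
    proof (intro allI impI)
      fix j assume j: "j < 2*p"
      have "U j = axis (Some (Ks ! (j div 2))) (if even j then 1 else \<i>)"
        unfolding U_def pairU_def using kt[of "j div 2"] j by simp
      then show "nak_dltrans lam (1, 0) (U j) = r j *\<^sub>R U j" unfolding r_def by (simp add: dltrans_lat1)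
    qed
    note eqd = this
    have loc: "local_form (2*p) (\<Omega> (twist lam x))" using pp_local ptw by blast
    have hom: "hom_form (2*p) (\<Omega> (twist lam x))" using pp_hom ptw by blast
    have "\<Omega> (twist lam x) (\<lambda>j. nak_dltrans lam (1, 0) (U j)) = \<Omega> (twist lam x) (\<lambda>j. r j *\<^sub>R U j)"
      by (rule loc[unfolded local_form_def, rule_format]) (use eqd in simp)
    also have "\<dots> = complex_of_real (\<Prod>j<2*p. r j) * \<Omega> (twist lam x) U"
      by (rule hom[unfolded hom_form_def, rule_format])
    also have "(\<Prod>j<2*p. r j) = exp (2 * S)"
    proof -
      have "(\<Prod>j<2*p. r j) = exp (\<Sum>j<2*p. lam (Ks ! (j div 2)))" unfolding r_def by (simp add: exp_sum)
      also have "(\<Sum>j<2*p. lam (Ks ! (j div 2))) = 2 * (\<Sum>t<p. lam (Ks ! t))" by (rule sum_div2)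
      also have "(\<Sum>t<p. lam (Ks ! t)) = S"
      proof -
        have "bij_betw ((!) Ks) {..<p} K" using bij_betw_nth[OF Ks(1)] lKs Ks(2) by simp
        then show ?thesis unfolding S_def using sum.reindex_bij_betw[of "(!) Ks" "{..<p}" K lam] by simp
      qed
      finally show ?thesis by simp
    qed
    finally have "complex_of_real (exp (2 * S)) * h (twist lam x) = h x" using e1 unfolding h_def by simp
    then show ?thesis by (simp add: field_simps exp_minus mult_exp_exp[symmetric])
  qed
  have kap: "exp (- 2 * S) \<noteq> 1" using K(2) unfolding S_def by simp
  have perv: "periodic P (\<lambda>x. \<Omega> x v)" for v
    unfolding periodic_def
  proof (intro allI)
    fix x a b
    have "\<Omega> (nak_ltrans lam (0, (\<chi> i. complex_of_real ((P *v ivec 1 a) $ i) + \<i> * complex_of_real ((P *v ivec 1 b) $ i))) x)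
             (\<lambda>j. nak_dltrans lam (0, (\<chi> i. complex_of_real ((P *v ivec 1 a) $ i) + \<i> * complex_of_real ((P *v ivec 1 b) $ i))) (v j))
          = \<Omega> x v" by (rule inv[OF lat0])
    then show "\<Omega> (x + lvec P (ivec 1 a) (ivec 1 b)) v = \<Omega> x v" unfolding ltrans_lat0 dltrans_lat0 .
  qed
  show False
  proof (rule core[of P M lam "{1..2*p}" h F V0 c "exp (- 2 * S)" "B / A"])
    show "invertible P" by (rule invP)
    show "det M = 1" by (rule detM)
    show "\<And>i a. exp (lam i) * (P *v a) $ i = (P *v (Mr M *v a)) $ i" by (rule PM_lemma[OF invP diag])
    show "finite {1..2*p}" by simp
    show "\<And>x. h differentiable (at x)" unfolding h_def by (rule smooth_diff[OF sm])
    show "\<And>i x. i \<in> {1..2*p} \<Longrightarrow> F i differentiable (at x)" unfolding F_def by (rule smooth_diff[OF sm])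
    show "\<And>i v. i \<in> {1..2*p} \<Longrightarrow> continuous_on UNIV (\<lambda>x. frechet_derivative (F i) (at x) v)"
      unfolding F_def by (rule smooth_cont_deriv[OF sm])
    show "periodic P h" unfolding h_def by (rule perv)
    show "\<And>i. i \<in> {1..2*p} \<Longrightarrow> periodic P (F i)" unfolding F_def by (rule perv)
    show "\<And>i. i \<in> {1..2*p} \<Longrightarrow> V0 i $ None = 0"
    proof -
      fix i assume i: "i \<in> {1..2*p}"
      then obtain j where j: "i = Suc j" "j < 2*p" by (cases i) auto
      have "U j $ None = 0" unfolding U_def pairU_def using kt[of "j div 2"] j(2) by (simp add: axis_def)
      then show "V0 i $ None = 0" unfolding V0_def j(1) by simp
    qed
    show "\<And>x. frechet_derivative h (at x) (axis None 1) = (\<Sum>i\<in>{1..2*p}. c i * frechet_derivative (F i) (at x) (V0 i))"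
      by (rule deq)
    show "\<And>x. h (twist lam x) = complex_of_real (exp (- 2 * S)) * h x" by (rule tw)
    show "exp (- 2 * S) \<noteq> 1" by (rule kap)
    show "B / A \<noteq> 0" by (rule rnz)
    show "\<And>x. \<exists>t>0. h x = complex_of_real t * (B / A)" by (rule hpos)
  qed
qed


theorem mainTheorem5:
  fixes M :: "int^'n^'n" and P :: "real^'n^'n" and lam :: "'n::finite \<Rightarrow> real"
    and \<tau> :: real and p :: nat
  assumes "CARD('n) \<ge> 2"
    and "det M = 1"
    and "invertible P"
    and "P ** (\<chi> i j. real_of_int (M $ i $ j)) ** matrix_inv P
           = (\<chi> i j. if i = j then exp (lam i) else 0)"
    and "\<forall>i. lam i \<noteq> 0"
    and "\<tau> \<noteq> 0"
    and "1 \<le> p" and "p \<le> CARD('n) - 1"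
  shows "\<not> (\<exists>\<Omega>. nakamura_p_kaehler lam P \<tau> p \<Omega>)"
proof
  assume "\<exists>\<Omega>. nakamura_p_kaehler lam P \<tau> p \<Omega>"
  then obtain \<Omega> where "nakamura_p_kaehler lam P \<tau> p \<Omega>" by blast
  then show False using main_contra[OF assms(1-5) assms(7-8)] by blast
qed

end
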